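(* Let $H$ be a strictly $2$-balanced graph and suppose $n^{-1/m_2(H)}\le p\le 1$. Let $\mathcal{H}$ be the family of all copies of $H$ in $K_n$ and, for a vertex $v$, let $\mathcal{H}_v\subseteq\mathcal{H}$ be those copies containing $v$. For all sufficiently large $n$: (i) for every edge $e\in K_n$, $\Pr\big(|\partial\partial_e\mathcal{H}[G_{n,p}]|\ge 4e_H^2n^{v_H-2}p^{e_H-2}\big)\le n^{-6}$; (ii) for every vertex $v$, $\Pr\big(|\partial\mathcal{H}_v[G_{n,p}]|\ge 2v_He_Hn^{v_H-1}p^{e_H-1}\big)\le n^{-6}$.
   Context: Copies of $H$ are regarded as sets of edges of $K_n$, so $\mathcal{H}$ is a hypergraph on the vertex set $E(K_n)$. For a hypergraph $\mathcal{G}$ and a vertex $e$, $\partial_e\mathcal{G}=\{A\setminus\{e\}: e\in A\in\mathcal{G}\}$ and $\partial\mathcal{G}=\bigcup_e\partial_e\mathcal{G}$. For a graph $G$ (edge set), $\mathcal{G}[G]=\{A\in\mathcal{G}:A\subseteq G\}$, and $\partial\partial_e\mathcal{H}[G]$ means $(\partial\partial_e\mathcal{H})[G]$, $\partial\mathcal{H}_v[G]$ means $(\partial\mathcal{H}_v)[G]$. Thus $\partial\partial_e\mathcal{H}[G]$ is the set of edge sets $A\setminus\{e,f\}$ with $e\in A\in\mathcal{H}$, $f\in A\setminus\{e\}$, contained in $G$. $m_2(H)=\max\{(e_F-1)/(v_F-2):F\subseteq H, e_F\ge2\}$; strictly $2$-balanced means this is attained only at $F=H$. *)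

theory Defs
  imports "HOL-Probability.Probability"
begin

definition simple_graph :: "'a set \<Rightarrow> 'a set set \<Rightarrow> bool" where
  "simple_graph V E \<longleftrightarrow> finite V \<and> (\<forall>e\<in>E. e \<subseteq> V \<and> card e = 2)"

definition subgraphs2 :: "'a set \<Rightarrow> 'a set set \<Rightarrow> ('a set \<times> 'a set set) set" where
  "subgraphs2 V E = {(VF, EF). VF \<subseteq> V \<and> EF \<subseteq> E \<and> (\<forall>e\<in>EF. e \<subseteq> VF) \<and> card EF \<ge> 2}"

definition d2 :: "'a set \<Rightarrow> 'a set set \<Rightarrow> real" where
  "d2 VF EF = (real (card EF) - 1) / (real (card VF) - 2)"

definition m2 :: "'a set \<Rightarrow> 'a set set \<Rightarrow> real" where
  "m2 V E = Max ((\<lambda>(VF, EF). d2 VF EF) ` subgraphs2 V E)"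

definition strictly_2_balanced :: "'a set \<Rightarrow> 'a set set \<Rightarrow> bool" where
  "strictly_2_balanced V E \<longleftrightarrow> simple_graph V E \<and> card E \<ge> 2 \<and>
     (\<forall>(VF, EF) \<in> subgraphs2 V E. d2 VF EF = m2 V E \<longrightarrow> (VF, EF) = (V, E))"

definition Kn_edges :: "nat \<Rightarrow> nat set set" where
  "Kn_edges n = {e. e \<subseteq> {..<n} \<and> card e = 2}"

definition copies :: "'a set \<Rightarrow> 'a set set \<Rightarrow> nat \<Rightarrow> nat set set set" where
  "copies V E n = {(\<lambda>e. f ` e) ` E | f. inj_on f V \<and> f ` V \<subseteq> {..<n}}"

definition copies_at :: "'a set \<Rightarrow> 'a set set \<Rightarrow> nat \<Rightarrow> nat \<Rightarrow> nat set set set" where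
  "copies_at V E n v = {A \<in> copies V E n. v \<in> \<Union>A}"

definition hlink :: "'b set set \<Rightarrow> 'b \<Rightarrow> 'b set set" where
  "hlink G e = {A - {e} | A. A \<in> G \<and> e \<in> A}"

definition hshadow :: "'b set set \<Rightarrow> 'b set set" where
  "hshadow G = (\<Union>e. hlink G e)"

definition hrestrict :: "'b set set \<Rightarrow> 'b set \<Rightarrow> 'b set set" where
  "hrestrict G S = {A \<in> G. A \<subseteq> S}"

definition Gnp :: "nat \<Rightarrow> real \<Rightarrow> nat set set pmf" where
  "Gnp n p = map_pmf (\<lambda>X. {e \<in> Kn_edges n. X e})
                (Pi_pmf (Kn_edges n) False (\<lambda>_. bernoulli_pmf p))"

end

theory Submission
  imports Defs
begin

lemma finite_Kn[simp]: "finite (Kn_edges n)"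
proof -
  have "Kn_edges n \<subseteq> Pow {..<n}" by (auto simp: Kn_edges_def)
  thus ?thesis by (rule finite_subset) auto
qed

lemma Gnp_support: "set_pmf (Gnp n p) \<subseteq> Pow (Kn_edges n)"
  by (auto simp: Gnp_def)

lemma prob_Gnp_sum:
  "measure_pmf.prob (Gnp n p) A = (\<Sum>G\<in>A \<inter> Pow (Kn_edges n). pmf (Gnp n p) G)"
proof -
  have "measure_pmf.prob (Gnp n p) A = measure_pmf.prob (Gnp n p) (A \<inter> set_pmf (Gnp n p))"
    by (simp add: measure_Int_set_pmf)
  also have "A \<inter> set_pmf (Gnp n p) = (A \<inter> Pow (Kn_edges n)) \<inter> set_pmf (Gnp n p)"
    using Gnp_support by blast
  also have "measure_pmf.prob (Gnp n p) \<dots> = measure_pmf.prob (Gnp n p) (A \<inter> Pow (Kn_edges n))"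
    by (simp add: measure_Int_set_pmf)
  also have "\<dots> = (\<Sum>G\<in>A \<inter> Pow (Kn_edges n). pmf (Gnp n p) G)"
    by (rule measure_measure_pmf_finite) auto
  finally show ?thesis .
qed

lemma Gnp_subset_prob:
  assumes p: "0 \<le> p" "p \<le> 1" and U: "U \<subseteq> Kn_edges n"
  shows "measure_pmf.prob (Gnp n p) {G. U \<subseteq> G} = p ^ card U"
proof -
  let ?K = "Kn_edges n"
  have "(\<lambda>X. {e \<in> ?K. X e}) -` {G. U \<subseteq> G} = Pi ?K (\<lambda>e. if e \<in> U then {True} else UNIV)"
    using U by (auto simp: Pi_def)
  hence "measure_pmf.prob (Gnp n p) {G. U \<subseteq> G} =
     measure_pmf.prob (Pi_pmf ?K False (\<lambda>_. bernoulli_pmf p)) (Pi ?K (\<lambda>e. if e \<in> U then {True} else UNIV))"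
    by (simp add: Gnp_def)
  also have "\<dots> = (\<Prod>e\<in>?K. measure_pmf.prob (bernoulli_pmf p) (if e \<in> U then {True} else UNIV))"
    by (rule measure_Pi_pmf_Pi) simp
  also have "\<dots> = (\<Prod>e\<in>?K. if e \<in> U then p else 1)"
    using p by (intro prod.cong) (auto simp: measure_pmf_single)
  also have "\<dots> = p ^ card U"
    using U by (simp add: prod.If_cases Int_absorb1 finite_subset)
  finally show ?thesis .
qed

lemma Gnp_subset_sum:
  assumes p: "0 \<le> p" "p \<le> 1" and U: "U \<subseteq> Kn_edges n"
  shows "(\<Sum>G\<in>Pow (Kn_edges n). pmf (Gnp n p) G * of_bool (U \<subseteq> G)) = p ^ card U"
proof -
  have "(\<Sum>G\<in>Pow (Kn_edges n). pmf (Gnp n p) G * of_bool (U \<subseteq> G)) =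
        (\<Sum>G\<in>{G. U \<subseteq> G} \<inter> Pow (Kn_edges n). pmf (Gnp n p) G)"
    by (rule sum.mono_neutral_cong_right) auto
  also have "\<dots> = p ^ card U" using Gnp_subset_prob[OF assms] prob_Gnp_sum by metis
  finally show ?thesis .
qed


lemma card_small_subsets:
  assumes "finite U"
  shows "card {T. T \<subseteq> U \<and> T \<noteq> {} \<and> card T \<le> s} \<le> card U ^ s"
proof -
  have sub: "{T. T \<subseteq> U \<and> T \<noteq> {} \<and> card T \<le> s} \<subseteq> set ` {xs. set xs \<subseteq> U \<and> length xs = s}"
  proof
    fix T assume T: "T \<in> {T. T \<subseteq> U \<and> T \<noteq> {} \<and> card T \<le> s}"
    hence fT: "finite T" using assms finite_subset by auto
    obtain xs where xs: "set xs = T" "distinct xs" using finite_distinct_list[OF fT] by blast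
    have len: "length xs \<le> s" using T xs distinct_card by fastforce
    have ne: "xs \<noteq> []" using T xs by auto
    define ys where "ys = xs @ replicate (s - length xs) (hd xs)"
    have "set ys = T" using ne xs by (auto simp: ys_def)
    moreover have "length ys = s" using len by (simp add: ys_def)
    ultimately show "T \<in> set ` {xs. set xs \<subseteq> U \<and> length xs = s}" using T by auto
  qed
  have "card {T. T \<subseteq> U \<and> T \<noteq> {} \<and> card T \<le> s} \<le> card (set ` {xs. set xs \<subseteq> U \<and> length xs = s})"
    by (rule card_mono[OF finite_imageI sub]) (simp add: assms finite_lists_length_eq)
  also have "\<dots> \<le> card {xs. set xs \<subseteq> U \<and> length xs = s}" by (rule card_image_le) (simp add: assms finite_lists_length_eq)
  also have "\<dots> = card U ^ s" using assms by (simp add: card_lists_length_eq)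
  finally show ?thesis .
qed

lemma Q_bound:
  fixes p :: real
  assumes p: "0 < p" "p \<le> 1" and fF: "finite F" and sz: "\<forall>B\<in>F. card B = s \<and> finite B"
    and M: "real (card F) * p^s \<le> M"
    and D: "\<forall>T. T \<noteq> {} \<longrightarrow> card T \<le> s \<longrightarrow> real (card {B\<in>F. T \<subseteq> B}) * p^(s - card T) \<le> D"
    and D0: "D \<ge> 0" and U: "finite U"
  shows "(\<Sum>B\<in>F. p ^ card (B - U)) \<le> M + real (card U ^ s) * D"
proof -
  let ?S0 = "{B\<in>F. B \<inter> U = {}}" and ?S1 = "{B\<in>F. B \<inter> U \<noteq> {}}"
  let ?TT = "{T. T \<subseteq> U \<and> T \<noteq> {} \<and> card T \<le> s}"
  have split: "(\<Sum>B\<in>F. p ^ card (B - U)) = (\<Sum>B\<in>?S0. p ^ card (B - U)) + (\<Sum>B\<in>?S1. p ^ card (B - U))"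
    using fF by (subst sum.union_disjoint[symmetric]) (auto intro: sum.cong)
  have "(\<Sum>B\<in>?S0. p ^ card (B - U)) = (\<Sum>B\<in>?S0. p ^ s)"
    using sz by (intro sum.cong) (auto simp: Diff_triv)
  also have "\<dots> = real (card ?S0) * p ^ s" by simp
  also have "\<dots> \<le> real (card F) * p ^ s"
    using p fF by (intro mult_right_mono) (auto intro: card_mono)
  finally have s0: "(\<Sum>B\<in>?S0. p ^ card (B - U)) \<le> M" using M by linarith
  have fTT: "finite ?TT" by (rule finite_subset[of _ "Pow U"]) (use U in auto)
  have img: "(\<lambda>B. B \<inter> U) ` ?S1 \<subseteq> ?TT"
  proof
    fix T assume "T \<in> (\<lambda>B. B \<inter> U) ` ?S1"
    then obtain B where B: "B \<in> F" "B \<inter> U \<noteq> {}" "T = B \<inter> U" by auto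
    have "card T \<le> card B" using B sz by (auto intro: card_mono)
    thus "T \<in> ?TT" using B sz by auto
  qed
  have "(\<Sum>B\<in>?S1. p ^ card (B - U)) = (\<Sum>T\<in>?TT. \<Sum>B\<in>{B\<in>?S1. B \<inter> U = T}. p ^ card (B - U))"
    by (rule sum.group[symmetric]) (use fF fTT img in auto)
  also have "\<dots> \<le> (\<Sum>T\<in>?TT. D)"
  proof (rule sum_mono)
    fix T assume T: "T \<in> ?TT"
    have "(\<Sum>B\<in>{B\<in>?S1. B \<inter> U = T}. p ^ card (B - U)) = (\<Sum>B\<in>{B\<in>?S1. B \<inter> U = T}. p ^ (s - card T))"
    proof (rule sum.cong[OF refl])
      fix B assume B: "B \<in> {B\<in>?S1. B \<inter> U = T}"
      have "B - U = B - T" using B by auto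
      moreover have "card (B - T) = card B - card T" using B sz by (intro card_Diff_subset) (auto intro: finite_subset)
      ultimately show "p ^ card (B - U) = p ^ (s - card T)" using B sz by auto
    qed
    also have "\<dots> = real (card {B\<in>?S1. B \<inter> U = T}) * p ^ (s - card T)" by simp
    also have "\<dots> \<le> real (card {B\<in>F. T \<subseteq> B}) * p ^ (s - card T)"
      using p fF by (intro mult_right_mono) (auto intro!: card_mono)
    also have "\<dots> \<le> D" using D T by auto
    finally show "(\<Sum>B\<in>{B\<in>?S1. B \<inter> U = T}. p ^ card (B - U)) \<le> D" .
  qed
  also have "\<dots> = real (card ?TT) * D" by simp
  also have "\<dots> \<le> real (card U ^ s) * D"
    using D0 card_small_subsets[OF U, of s] by (intro mult_right_mono) auto
  finally show ?thesis using split s0 by linarith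
qed


lemma moment_tail:
  fixes p :: real
  assumes p: "0 < p" "p \<le> 1" and F: "F \<subseteq> Pow (Kn_edges n)" and sz: "\<forall>B\<in>F. card B = s"
    and M: "real (card F) * p^s \<le> M"
    and D: "\<forall>T. T \<noteq> {} \<longrightarrow> card T \<le> s \<longrightarrow> real (card {B\<in>F. T \<subseteq> B}) * p^(s - card T) \<le> D"
    and D0: "D \<ge> 0" and t: "t > 0"
  shows "measure_pmf.prob (Gnp n p) {G. real (card (hrestrict F G)) \<ge> t}
          \<le> ((M + real ((K * s)^s) * D) / t) ^ K"
proof -
  let ?Kn = "Kn_edges n"
  let ?P = "pmf (Gnp n p)"
  define X where "X G = real (card (hrestrict F G))" for G
  define R where "R = M + real ((K * s)^s) * D"
  have fF: "finite F" using F by (rule finite_subset) simp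
  have sz': "\<forall>B\<in>F. card B = s \<and> finite B" using sz F by (auto intro: finite_subset[OF _ finite_Kn])
  have M0: "M \<ge> 0" using M p by (smt (verit) of_nat_0_le_iff zero_le_mult_iff zero_le_power)
  have R0: "R \<ge> 0" using M0 D0 by (simp add: R_def)
  have Xsum: "X G = (\<Sum>B\<in>F. of_bool (B \<subseteq> G))" for G
  proof -
    have "X G = (\<Sum>B\<in>{B\<in>F. B \<subseteq> G}. 1)" by (simp add: X_def hrestrict_def)
    also have "\<dots> = (\<Sum>B\<in>F. if B \<subseteq> G then 1 else 0)" by (rule sum.inter_filter[OF fF])
    finally show ?thesis by (simp add: of_bool_def)
  qed
  define Phi where "Phi k U = (\<Sum>G\<in>Pow ?Kn. ?P G * X G ^ k * of_bool (U \<subseteq> G))" for k U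
  have Phi0: "Phi 0 U = p ^ card U" if "U \<subseteq> ?Kn" for U
    using Gnp_subset_sum[of p U n] p that by (simp add: Phi_def)
  have PhiS: "Phi (Suc k) U = (\<Sum>B\<in>F. Phi k (U \<union> B))" for k U
  proof -
    have "Phi (Suc k) U = (\<Sum>G\<in>Pow ?Kn. \<Sum>B\<in>F. ?P G * X G ^ k * of_bool (U \<union> B \<subseteq> G))"
      unfolding Phi_def
    proof (rule sum.cong[OF refl])
      fix G
      have "?P G * X G ^ Suc k * of_bool (U \<subseteq> G) = ?P G * X G ^ k * (X G * of_bool (U \<subseteq> G))"
        by (simp add: algebra_simps)
      also have "X G * of_bool (U \<subseteq> G) = (\<Sum>B\<in>F. of_bool (U \<union> B \<subseteq> G))"
        unfolding Xsum sum_distrib_right by (intro sum.cong) auto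
      finally show "?P G * X G ^ Suc k * of_bool (U \<subseteq> G) = (\<Sum>B\<in>F. ?P G * X G ^ k * of_bool (U \<union> B \<subseteq> G))"
        by (simp add: sum_distrib_left)
    qed
    also have "\<dots> = (\<Sum>B\<in>F. Phi k (U \<union> B))" unfolding Phi_def by (rule sum.swap)
    finally show ?thesis .
  qed
  have main: "\<forall>U. U \<subseteq> ?Kn \<longrightarrow> card U \<le> (K - k) * s \<longrightarrow> Phi k U \<le> R ^ k * p ^ card U" if "k \<le> K" for k
    using that
  proof (induction k)
    case 0 thus ?case using Phi0 by simp
  next
    case (Suc k)
    show ?case
    proof (intro allI impI)
      fix U assume U: "U \<subseteq> ?Kn" "card U \<le> (K - Suc k) * s"
      have fU: "finite U" using U(1) finite_Kn by (rule finite_subset)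
      have "Phi (Suc k) U = (\<Sum>B\<in>F. Phi k (U \<union> B))" by (rule PhiS)
      also have "\<dots> \<le> (\<Sum>B\<in>F. R ^ k * p ^ card (U \<union> B))"
      proof (rule sum_mono)
        fix B assume B: "B \<in> F"
        have "card (U \<union> B) \<le> card U + card B" by (rule card_Un_le)
        also have "\<dots> \<le> (K - k) * s"
        proof -
          have "K - k = Suc (K - Suc k)" using Suc.prems by simp
          hence "(K - k) * s = (K - Suc k) * s + s" by simp
          thus ?thesis using U B sz by simp
        qed
        finally show "Phi k (U \<union> B) \<le> R ^ k * p ^ card (U \<union> B)"
          using Suc.IH Suc.prems B U F by auto
      qed
      also have "\<dots> = R ^ k * p ^ card U * (\<Sum>B\<in>F. p ^ card (B - U))"
      proof -
        have "card (U \<union> B) = card U + card (B - U)" if "B \<in> F" for B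
        proof -
          have "U \<union> B = U \<union> (B - U)" by auto
          moreover have "finite B" using sz' that by auto
          ultimately show ?thesis using fU by (metis card_Un_disjoint Diff_disjoint finite_Diff)
        qed
        thus ?thesis by (simp add: sum_distrib_left power_add mult.assoc)
      qed
      also have "\<dots> \<le> R ^ k * p ^ card U * (M + real (card U ^ s) * D)"
        using Q_bound[OF p fF sz' M D D0 fU] R0 p by (intro mult_left_mono) auto
      also have "\<dots> \<le> R ^ k * p ^ card U * R"
      proof -
        have "card U \<le> K * s" using U(2) by (meson diff_le_self le_trans mult_le_mono1)
        hence "card U ^ s \<le> (K * s)^s" by (rule power_mono) simp
        hence "real (card U ^ s) \<le> real ((K * s)^s)" by (simp only: of_nat_le_iff)
        hence "real (card U ^ s) * D \<le> real ((K * s)^s) * D" using D0 by (intro mult_right_mono) auto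
        moreover have "0 \<le> R ^ k * p ^ card U" using R0 p by simp
        ultimately show ?thesis unfolding R_def by (intro mult_left_mono) auto
      qed
      finally show "Phi (Suc k) U \<le> R ^ Suc k * p ^ card U" by (simp add: algebra_simps)
    qed
  qed
  have PhiK: "Phi K {} \<le> R ^ K" using main[of K] by auto
  have "measure_pmf.prob (Gnp n p) {G. X G \<ge> t} = (\<Sum>G\<in>{G. X G \<ge> t} \<inter> Pow ?Kn. ?P G)"
    by (rule prob_Gnp_sum)
  also have "\<dots> \<le> (\<Sum>G\<in>Pow ?Kn. ?P G * (X G / t) ^ K)"
  proof -
    have "(\<Sum>G\<in>{G. X G \<ge> t} \<inter> Pow ?Kn. ?P G) \<le> (\<Sum>G\<in>{G. X G \<ge> t} \<inter> Pow ?Kn. ?P G * (X G / t) ^ K)"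
    proof (rule sum_mono)
      fix G assume "G \<in> {G. X G \<ge> t} \<inter> Pow ?Kn"
      hence "1 \<le> X G / t" using t by auto
      hence "1 \<le> (X G / t) ^ K" by (rule one_le_power)
      thus "?P G \<le> ?P G * (X G / t) ^ K" by (simp add: mult_le_cancel_left1 pmf_nonneg)
    qed
    also have "\<dots> \<le> (\<Sum>G\<in>Pow ?Kn. ?P G * (X G / t) ^ K)"
      using t by (intro sum_mono2) (auto simp: X_def)
    finally show ?thesis .
  qed
  also have "\<dots> = Phi K {} / t ^ K"
    by (simp add: Phi_def sum_divide_distrib power_divide)
  also have "\<dots> \<le> R ^ K / t ^ K" using PhiK t by (simp add: divide_right_mono)
  finally show ?thesis by (simp add: X_def R_def power_divide)
qed


lemma ln_le_powr: fixes x g :: real assumes "x > 0" "g > 0" shows "ln x \<le> x powr g / g"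
proof -
  have "ln (x powr g) \<le> x powr g - 1" using assms by (intro ln_le_minus_one) auto
  hence "g * ln x \<le> x powr g" using assms by (simp add: ln_powr)
  thus ?thesis using assms by (simp add: field_simps)
qed

lemma asymp_K:
  fixes d C :: real and s :: nat
  assumes d: "d > 0" and C: "C \<ge> 0"
  shows "\<exists>N. \<forall>n\<ge>N. \<exists>K. ((1 + real ((K * s)^s) * C * real n powr (-d)) / 2) ^ K \<le> real n powr (-6)"
proof -
  define g where "g = d / (2 * (real s + 1))"
  have g: "g > 0" using d by (simp add: g_def)
  define A where "A = 32 * real s / g"
  have A: "A \<ge> 0" using g by (simp add: A_def)
  define N0 where "N0 = (10 * C * A ^ s + 1) powr (2 / d)"
  define N where "N = max 2 (nat \<lceil>N0\<rceil>)"
  show ?thesis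
  proof (rule exI[of _ N], intro allI impI)
    fix n :: nat assume nN: "N \<le> n"
    have n2: "n \<ge> 2" using nN by (simp add: N_def)
    hence npos: "real n > 0" and n1: "real n \<ge> 1" by auto
    have nN0: "real n \<ge> N0" using nN unfolding N_def by linarith
    define L where "L = nat \<lceil>log 2 (real n)\<rceil>"
    define K where "K = 8 * L"
    have lg1: "log 2 (real n) \<ge> 1" using n2 by simp
    have L_up: "real L \<le> log 2 (real n) + 1" unfolding L_def using lg1 by linarith
    have twoL: "real n \<le> 2 ^ L"
    proof -
      have "real n = 2 powr (log 2 (real n))" using npos by simp
      also have "\<dots> \<le> 2 powr (real L)" unfolding L_def using lg1 by (intro powr_mono) linarith+
      also have "\<dots> = 2 ^ L" by (simp add: powr_realpow)
      finally show ?thesis .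
    qed
    have lnn: "ln (real n) > 0" using n2 by simp
    have "real L \<le> 2 * log 2 (real n)" using L_up lg1 by linarith
    also have "\<dots> = 2 * (ln (real n) / ln 2)" by (simp add: log_def)
    also have "\<dots> \<le> 4 * ln (real n)"
    proof -
      have "ln (1/2::real) \<le> 1/2 - 1" by (rule ln_le_minus_one) simp
      hence "ln 2 \<ge> (1/2::real)" by (simp add: ln_div)
      hence "ln (real n) / ln 2 \<le> ln (real n) / (1/2)" using lnn by (intro divide_left_mono) auto
      thus ?thesis by simp
    qed
    also have "\<dots> \<le> 4 * (real n powr g / g)" using ln_le_powr[OF npos g] by simp
    finally have Lb: "real L \<le> 4 * (real n powr g / g)" .
    have Ks: "real (K * s) \<le> A * real n powr g"
    proof -
      have "real (K * s) = 8 * real L * real s" by (simp add: K_def)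
      also have "\<dots> \<le> 8 * (4 * (real n powr g / g)) * real s" using Lb by (intro mult_right_mono) auto
      also have "\<dots> = A * real n powr g" by (simp add: A_def)
      finally show ?thesis .
    qed
    have "real ((K * s)^s) \<le> (A * real n powr g) ^ s"
      using Ks by (simp only: of_nat_power) (intro power_mono, auto)
    also have "\<dots> = A ^ s * real n powr (g * real s)"
    proof -
      have "(real n powr g) ^ s = (real n powr g) powr (real s)" using npos by (simp add: powr_realpow)
      also have "\<dots> = real n powr (g * real s)" by (simp add: powr_powr)
      finally show ?thesis by (simp add: power_mult_distrib)
    qed
    also have "\<dots> \<le> A ^ s * real n powr (d / 2)"
    proof -
      have "g * real s \<le> d / 2" using d unfolding g_def by (simp add: field_simps)
      thus ?thesis using A n1 by (intro mult_left_mono powr_mono) auto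
    qed
    finally have KsB: "real ((K * s)^s) \<le> A ^ s * real n powr (d / 2)" .
    have big: "real n powr (d / 2) \<ge> 10 * C * A ^ s + 1"
    proof -
      have pos: "10 * C * A ^ s + 1 > 0" using C A by (simp add: add_nonneg_pos)
      have "10 * C * A ^ s + 1 = N0 powr (d/2)" unfolding N0_def using pos d by (simp add: powr_powr)
      also have "\<dots> \<le> real n powr (d / 2)" using nN0 d unfolding N0_def by (intro powr_mono2) auto
      finally show ?thesis .
    qed
    have small: "real ((K * s)^s) * C * real n powr (-d) \<le> 1/10"
    proof -
      have "real ((K * s)^s) * C * real n powr (-d) \<le> A ^ s * real n powr (d / 2) * C * real n powr (-d)"
        using KsB C by (intro mult_right_mono) auto
      also have "\<dots> = C * A ^ s / real n powr (d / 2)"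
      proof -
        have dd: "real n powr d = real n powr (d/2) * real n powr (d/2)"
          by (subst powr_add[symmetric]) simp
        have e: "real n powr (-d) = 1 / (real n powr (d/2) * real n powr (d/2))"
          by (subst powr_minus) (simp only: dd inverse_eq_divide)
        have gen: "\<And>a X. a > 0 \<Longrightarrow> X * a * C * (1 / (a * a)) = C * X / (a::real)"
          by (simp add: field_simps)
        show ?thesis unfolding e by (rule gen) (use npos in simp)
      qed
      also have "\<dots> \<le> 1/10"
      proof -
        have "C * A ^ s * 10 \<le> real n powr (d / 2)" using big by linarith
        moreover have "real n powr (d / 2) > 0" using npos by simp
        ultimately show ?thesis by (subst pos_divide_le_eq) auto
      qed
      finally show ?thesis .
    qed
    have gen: "\<And>x::real. x \<le> 1/10 \<Longrightarrow> (1 + x) / 2 \<le> 11/20" by simp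
    have base: "(1 + real ((K * s)^s) * C * real n powr (-d)) / 2 \<le> 11/20" using small by (rule gen)
    have base0: "0 \<le> (1 + real ((K * s)^s) * C * real n powr (-d)) / 2" using C by simp
    have "((1 + real ((K * s)^s) * C * real n powr (-d)) / 2) ^ K \<le> (11/20) ^ K"
      by (intro power_mono base base0)
    also have "\<dots> = ((11/20) ^ 8) ^ L" by (simp add: K_def power_mult)
    also have "\<dots> \<le> (1/64) ^ L" by (intro power_mono) (auto simp: power_numeral_reduce)
    also have "\<dots> = 1 / (2 ^ L) ^ 6"
    proof -
      have "(1/64::real) ^ L = 1 / (2 ^ 6) ^ L" by (simp add: power_one_over)
      also have "((2::real) ^ 6) ^ L = (2 ^ L) ^ 6" by (metis power_mult mult.commute)
      finally show ?thesis .
    qed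
    also have "\<dots> \<le> 1 / real n ^ 6" using twoL npos by (intro divide_left_mono power_mono mult_pos_pos) auto
    also have "\<dots> = real n powr (-6)" using npos by (simp add: powr_minus powr_realpow divide_inverse)
    finally show "\<exists>K. ((1 + real ((K * s)^s) * C * real n powr (-d)) / 2) ^ K \<le> real n powr (-6)" by blast
  qed
qed


lemma card_Un_two:
  assumes "card y1 = 2" "card y2 = 2" "y1 \<noteq> y2"
  shows "card (y1 \<union> y2) \<ge> 3"
proof -
  have f: "finite y1" "finite y2" using assms by (auto intro: card_ge_0_finite)
  have "\<not> y2 \<subseteq> y1"
  proof
    assume "y2 \<subseteq> y1"
    hence "y2 = y1" using assms f by (intro card_subset_eq) auto
    thus False using assms by simp
  qed
  hence "y1 \<subset> y1 \<union> y2" by auto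
  hence "card y1 < card (y1 \<union> y2)" using f by (intro psubset_card_mono) auto
  thus ?thesis using assms by simp
qed

context
  fixes V :: "'a set" and E :: "'a set set"
  assumes sb: "strictly_2_balanced V E"
begin

lemma sg: "finite V" "\<And>y. y \<in> E \<Longrightarrow> y \<subseteq> V" "\<And>y. y \<in> E \<Longrightarrow> card y = 2" "card E \<ge> 2"
  using sb by (auto simp: strictly_2_balanced_def simple_graph_def)

lemma finE: "finite E"
proof -
  have "E \<subseteq> Pow V" using sg by auto
  thus ?thesis using sg(1) by (rule finite_subset[OF _ finite_Pow_iff[THEN iffD2]])
qed

lemma fin_sub2: "finite (subgraphs2 V E)"
proof -
  have "subgraphs2 V E \<subseteq> Pow V \<times> Pow E" by (auto simp: subgraphs2_def)
  thus ?thesis using sg(1) finE by (rule finite_subset[OF _ finite_cartesian_product[OF finite_Pow_iff[THEN iffD2] finite_Pow_iff[THEN iffD2]]])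
qed

lemma VE_in: "(V, E) \<in> subgraphs2 V E"
  using sg by (auto simp: subgraphs2_def)

lemma d2_le: "(VF, EF) \<in> subgraphs2 V E \<Longrightarrow> d2 VF EF \<le> m2 V E"
  unfolding m2_def using fin_sub2 by (intro Max_ge) force+

lemma d2_less: "(VF, EF) \<in> subgraphs2 V E \<Longrightarrow> (VF, EF) \<noteq> (V, E) \<Longrightarrow> d2 VF EF < m2 V E"
  using d2_le[of VF EF] sb unfolding strictly_2_balanced_def by fastforce

lemma m2_eq: "m2 V E = d2 V E"
proof -
  have ne: "(\<lambda>(VF, EF). d2 VF EF) ` subgraphs2 V E \<noteq> {}" using VE_in by blast
  have "m2 V E \<in> (\<lambda>(VF, EF). d2 VF EF) ` subgraphs2 V E"
    unfolding m2_def using fin_sub2 ne by (intro Max_in) auto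
  then obtain VF EF where X: "(VF, EF) \<in> subgraphs2 V E" "m2 V E = d2 VF EF" by auto
  thus ?thesis using d2_less[OF X(1)] by fastforce
qed

lemma two_edges: obtains h1 h2 where "h1 \<in> E" "h2 \<in> E" "h1 \<noteq> h2"
proof -
  have "E \<noteq> {}" using sg(4) by auto
  then obtain h1 where h1: "h1 \<in> E" by auto
  have "card (E - {h1}) \<ge> 1" using sg(4) h1 finE by (simp add: card_Diff_singleton)
  hence "E - {h1} \<noteq> {}" by (metis card.empty not_one_le_zero)
  then obtain h2 where "h2 \<in> E - {h1}" by auto
  thus ?thesis using that h1 by auto
qed

lemma cardV3: "card V \<ge> 3"
proof -
  obtain h1 h2 where h: "h1 \<in> E" "h2 \<in> E" "h1 \<noteq> h2" by (rule two_edges)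
  have "3 \<le> card (h1 \<union> h2)" using h sg by (intro card_Un_two) auto
  also have "\<dots> \<le> card V" using h sg by (intro card_mono) auto
  finally show ?thesis .
qed

lemma m2_pos: "m2 V E > 0"
  using m2_eq cardV3 sg(4) by (simp add: d2_def)

lemma sg1:
  assumes "eH \<in> E" "gH \<in> E" "eH \<noteq> gH" "TH \<subseteq> E - {eH, gH}" "TH \<noteq> {}"
  shows "real (card TH) < m2 V E * (real (card (\<Union>TH \<union> eH)) - 2)"
    and "card (\<Union>TH \<union> eH) \<ge> 3"
proof -
  let ?W = "\<Union>TH \<union> eH"
  have fTH: "finite TH" using assms(4) finE finite_subset by blast
  obtain y where y: "y \<in> TH" using assms by auto
  have "3 \<le> card (eH \<union> y)" using y assms sg by (intro card_Un_two) auto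
  also have "\<dots> \<le> card ?W" using y sg assms by (intro card_mono) (auto intro: finite_subset)
  finally show W3: "card ?W \<ge> 3" .
  have "eH \<notin> TH" using assms(4) by auto
  hence "card (insert eH TH) = card TH + 1" using fTH by simp
  moreover have "card TH \<ge> 1" using fTH assms(5) by (simp add: Suc_le_eq card_gt_0_iff)
  ultimately have c2: "card (insert eH TH) \<ge> 2" by simp
  have "?W \<subseteq> V" using assms sg by auto
  moreover have "insert eH TH \<subseteq> E" using assms by auto
  moreover have "\<forall>e\<in>insert eH TH. e \<subseteq> ?W" by auto
  ultimately have K: "(?W, insert eH TH) \<in> subgraphs2 V E" using c2 by (simp add: subgraphs2_def)
  have "(?W, insert eH TH) \<noteq> (V, E)" using assms by auto
  hence "d2 ?W (insert eH TH) < m2 V E" using d2_less K by blast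
  hence "real (card TH) / (real (card ?W) - 2) < m2 V E"
    using \<open>card (insert eH TH) = card TH + 1\<close> by (simp add: d2_def)
  moreover have "real (card ?W) - 2 > 0" using W3 by simp
  ultimately show "real (card TH) < m2 V E * (real (card ?W) - 2)"
    by (simp add: divide_less_eq mult.commute)
qed

lemma m2_gt1: assumes "card E \<ge> 3" shows "m2 V E > 1"
proof (cases "\<exists>h1\<in>E. \<exists>h2\<in>E. h1 \<noteq> h2 \<and> h1 \<inter> h2 \<noteq> {}")
  case True
  then obtain h1 h2 where h: "h1 \<in> E" "h2 \<in> E" "h1 \<noteq> h2" "h1 \<inter> h2 \<noteq> {}" by auto
  have c1: "card h1 = 2" "card h2 = 2" using h sg by auto
  have f: "finite h1" "finite h2" using c1 by (auto intro: card_ge_0_finite)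
  have "card (h1 \<union> h2) + card (h1 \<inter> h2) = 4" using card_Un_Int[OF f] c1 by simp
  moreover have "card (h1 \<inter> h2) \<ge> 1" using h f by (simp add: Suc_leI card_gt_0_iff)
  moreover have "card (h1 \<union> h2) \<ge> 3" using c1 h by (intro card_Un_two) auto
  ultimately have c3: "card (h1 \<union> h2) = 3" by linarith
  have K: "(h1 \<union> h2, {h1, h2}) \<in> subgraphs2 V E"
    unfolding subgraphs2_def using h sg(2)[of h1] sg(2)[of h2] by auto
  have "E \<noteq> {h1, h2}" using assms h(3) by (metis card_2_iff numeral_le_iff semiring_norm(69) semiring_norm(72) order_refl not_less_eq_eq eval_nat_numeral(3))
  hence "(h1 \<union> h2, {h1, h2}) \<noteq> (V, E)" by simp
  hence "d2 (h1 \<union> h2) {h1, h2} < m2 V E" using d2_less K by blast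
  thus ?thesis using c3 h by (simp add: d2_def)
next
  case False
  obtain h1 h2 where h: "h1 \<in> E" "h2 \<in> E" "h1 \<noteq> h2" by (rule two_edges)
  have c1: "card h1 = 2" "card h2 = 2" using h sg by auto
  have f: "finite h1" "finite h2" using c1 by (auto intro: card_ge_0_finite)
  have "card (h1 \<union> h2) + card (h1 \<inter> h2) = 4" using card_Un_Int[OF f] c1 by simp
  moreover have "h1 \<inter> h2 = {}" using False h by blast
  ultimately have c4: "card (h1 \<union> h2) = 4" by simp
  have K: "(h1 \<union> h2, {h1, h2}) \<in> subgraphs2 V E"
    unfolding subgraphs2_def using h sg(2)[of h1] sg(2)[of h2] by auto
  have "E \<noteq> {h1, h2}" using assms h(3) by (metis card_2_iff numeral_le_iff semiring_norm(69) semiring_norm(72) order_refl not_less_eq_eq eval_nat_numeral(3))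
  hence "(h1 \<union> h2, {h1, h2}) \<noteq> (V, E)" by simp
  hence "d2 (h1 \<union> h2) {h1, h2} < m2 V E" using d2_less K by blast
  hence lt: "1/2 < m2 V E" using c4 h by (simp add: d2_def)
  have pw: "pairwise disjnt E" unfolding pairwise_def disjnt_def using False by blast
  have fy: "\<And>y. y \<in> E \<Longrightarrow> finite y" using sg(3) by (metis card.infinite zero_neq_numeral)
  have "card (\<Union>E) = (\<Sum>y\<in>E. card y)" using pw fy by (rule card_Union_disjoint)
  also have "\<dots> = 2 * card E" using sg by simp
  moreover have "card (\<Union>E) \<le> card V" using sg(1) sg(2) by (intro card_mono) auto
  ultimately have "2 * card E \<le> card V" by simp
  hence "2 * real (card E) \<le> real (card V)" by (metis of_nat_le_iff of_nat_mult of_nat_numeral)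
  hence "real (card V) - 2 \<ge> 2 * (real (card E) - 1)" by (simp add: algebra_simps)
  moreover have "real (card E) - 1 > 0" using sg by simp
  ultimately have "(real (card E) - 1) / (real (card V) - 2) \<le> 1/2"
    by (subst pos_divide_le_eq) auto
  thus ?thesis using lt m2_eq by (simp add: d2_def)
qed

lemma sg2:
  assumes gt1: "m2 V E > 1" and "gH \<in> E" "TH \<subseteq> E - {gH}" "TH \<noteq> {}" "x \<in> V"
  shows "real (card TH) < m2 V E * (real (card (\<Union>TH \<union> {x})) - 1)"
proof -
  let ?W = "\<Union>TH \<union> {x}"
  have fTH: "finite TH" using assms(3) finE finite_subset by blast
  have fW: "finite ?W" using assms sg fTH by (intro finite_subset[OF _ sg(1)]) auto
  obtain y where y: "y \<in> TH" using assms by auto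
  show ?thesis
  proof (cases "card TH = 1")
    case True
    have "card y \<le> card ?W" using fW y by (intro card_mono) auto
    moreover have "card y = 2" using y assms sg by auto
    ultimately have "2 \<le> card ?W" by simp
    hence "m2 V E * 1 \<le> m2 V E * (real (card ?W) - 1)" using gt1 by (intro mult_left_mono) auto
    moreover have "real (card TH) = 1" using True by simp
    ultimately show ?thesis using gt1 by linarith
  next
    case False
    hence c2: "card TH \<ge> 2" using assms fTH by (metis One_nat_def card_0_eq less_2_cases not_less)
    have "card (TH - {y}) \<ge> 1" using c2 y fTH by (simp add: card_Diff_singleton)
    hence "TH - {y} \<noteq> {}" by (metis card.empty not_one_le_zero)
    then obtain y2 where y2: "y2 \<in> TH" "y2 \<noteq> y" by auto
    have u3: "3 \<le> card (\<Union>TH)"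
    proof -
      have "3 \<le> card (y \<union> y2)" using y y2 assms sg by (intro card_Un_two) auto
      also have "\<dots> \<le> card (\<Union>TH)" using y y2 fW by (intro card_mono) (auto intro: finite_subset)
      finally show ?thesis .
    qed
    have K: "(\<Union>TH, TH) \<in> subgraphs2 V E" using assms sg c2 by (auto simp: subgraphs2_def)
    have "(\<Union>TH, TH) \<noteq> (V, E)" using assms by auto
    hence "d2 (\<Union>TH) TH < m2 V E" using d2_less K by blast
    hence "(real (card TH) - 1) / (real (card (\<Union>TH)) - 2) < m2 V E" by (simp add: d2_def)
    moreover have "real (card (\<Union>TH)) - 2 > 0" using u3 by simp
    ultimately have a: "real (card TH) - 1 < m2 V E * (real (card (\<Union>TH)) - 2)"
      by (simp add: divide_less_eq mult.commute)
    have "card (\<Union>TH) \<le> card ?W" using fW by (intro card_mono) auto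
    hence b: "m2 V E * (real (card (\<Union>TH)) - 1) \<le> m2 V E * (real (card ?W) - 1)"
      using gt1 by (intro mult_left_mono) auto
    have c: "m2 V E * (real (card (\<Union>TH)) - 2) + 1 < m2 V E * (real (card (\<Union>TH)) - 1)"
      using gt1 by (simp add: algebra_simps)
    show ?thesis using a b c by linarith
  qed
qed

end

definition del :: "'a set \<Rightarrow> 'a set set \<Rightarrow> real" where
  "del V E = Min (insert 1 {x. \<exists>w t c. w \<le> card V \<and> t \<le> card E \<and> c \<le> (2::nat) \<and>
      x = real w - real c - real t / m2 V E \<and> x > 0})"

lemma del_props:
  shows "del V E > 0" "del V E \<le> 1"
    and "\<And>w t c. w \<le> card V \<Longrightarrow> t \<le> card E \<Longrightarrow> c \<le> 2 \<Longrightarrow>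
            0 < real w - real c - real t / m2 V E \<Longrightarrow> del V E \<le> real w - real c - real t / m2 V E"
proof -
  let ?S = "{x. \<exists>w t c. w \<le> card V \<and> t \<le> card E \<and> c \<le> (2::nat) \<and>
      x = real w - real c - real t / m2 V E \<and> x > 0}"
  have "?S \<subseteq> (\<lambda>(w,t,c). real w - real c - real t / m2 V E) ` ({..card V} \<times> {..card E} \<times> {..2::nat})"
  proof
    fix x assume "x \<in> ?S"
    then obtain w t c where wtc: "w \<le> card V" "t \<le> card E" "c \<le> (2::nat)" "x = real w - real c - real t / m2 V E" by blast
    thus "x \<in> (\<lambda>(w,t,c). real w - real c - real t / m2 V E) ` ({..card V} \<times> {..card E} \<times> {..2::nat})"
      by (intro image_eqI[of _ _ "(w,t,c)"]) auto
  qed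
  hence fin: "finite (insert 1 ?S)" by (auto intro: finite_subset)
  show "del V E > 0" unfolding del_def using fin by (subst Min_gr_iff) auto
  show "del V E \<le> 1" unfolding del_def using fin by (intro Min_le) auto
  fix w t c assume "w \<le> card V" "t \<le> card E" "c \<le> (2::nat)" "0 < real w - real c - real t / m2 V E"
  thus "del V E \<le> real w - real c - real t / m2 V E" unfolding del_def using fin by (intro Min_le) blast+
qed

lemma K1:
  fixes m p d :: real
  assumes m: "m > 0" and n: "real n \<ge> 1" and p: "p > 0" and pl: "real n powr (-1/m) \<le> p"
    and ts: "t \<le> s" and wv: "w \<le> v" and cw: "c \<le> w" and d: "d \<le> real w - real c - real t / m"
  shows "real n ^ (v - w) * p ^ (s - t) \<le> real n powr (-d) * (real n ^ (v - c) * p ^ s)"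
proof -
  have npos: "real n > 0" using n by simp
  have pt: "real n powr (- (real t / m)) \<le> p ^ t"
  proof -
    have "real n powr (- (real t / m)) = (real n powr (-1/m)) ^ t"
      using npos by (simp add: powr_realpow[symmetric] powr_powr)
    also have "\<dots> \<le> p ^ t" using pl npos by (intro power_mono) auto
    finally show ?thesis .
  qed
  have ps: "p ^ (s - t) = p ^ s / p ^ t" using ts p by (simp add: power_diff)
  have "p ^ (s - t) \<le> p ^ s / real n powr (- (real t / m))"
    unfolding ps using p pt npos by (intro divide_left_mono) auto
  also have "\<dots> = p ^ s * real n powr (real t / m)" by (simp add: powr_minus divide_inverse)
  finally have a: "p ^ (s - t) \<le> p ^ s * real n powr (real t / m)" .
  have "real n ^ (v - w) * p ^ (s - t) \<le> real n ^ (v - w) * (p ^ s * real n powr (real t / m))"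
    using a by (intro mult_left_mono) auto
  also have "\<dots> = real n powr (real v - real w + real t / m) * p ^ s"
    using npos wv by (simp add: powr_realpow[symmetric] powr_add of_nat_diff)
  also have "\<dots> \<le> real n powr (-d + (real v - real c)) * p ^ s"
    using n d p by (intro mult_right_mono powr_mono) auto
  also have "\<dots> = real n powr (-d) * (real n ^ (v - c) * p ^ s)"
  proof -
    have "real n powr (-d + (real v - real c)) = real n powr (-d) * real n powr (real v - real c)"
      by (rule powr_add)
    moreover have "real n powr (real v - real c) = real n ^ (v - c)"
      using npos cw wv by (simp add: powr_realpow[symmetric] of_nat_diff)
    ultimately show ?thesis by simp
  qed
  finally show ?thesis .
qed

lemma count_ext:
  fixes V W :: "'a set" and Psi :: "('a \<Rightarrow> nat) set"
  assumes V: "finite V" and WV: "W \<subseteq> V" and Psi: "Psi \<subseteq> PiE W (\<lambda>_. {..<n})"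
  shows "card {h \<in> PiE V (\<lambda>_. {..<n}). restrict h W \<in> Psi} \<le> card Psi * n ^ (card V - card W)"
proof -
  let ?A = "{h \<in> PiE V (\<lambda>_. {..<n}). restrict h W \<in> Psi}"
  let ?g = "\<lambda>h. (restrict h W, restrict h (V - W))"
  have fW: "finite W" using V WV finite_subset by blast
  have fPsi: "finite Psi" using Psi fW by (meson finite_PiE finite_lessThan finite_subset)
  have inj: "inj_on ?g ?A"
  proof
    fix h1 h2 assume h: "h1 \<in> ?A" "h2 \<in> ?A" "?g h1 = ?g h2"
    show "h1 = h2"
    proof
      fix x
      show "h1 x = h2 x"
      proof (cases "x \<in> V")
        case True
        have e1: "restrict h1 W = restrict h2 W" and e2: "restrict h1 (V - W) = restrict h2 (V - W)" using h(3) by auto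
        show ?thesis
        proof (cases "x \<in> W")
          case True thus ?thesis using fun_cong[OF e1, of x] by simp
        next
          case False thus ?thesis using fun_cong[OF e2, of x] \<open>x \<in> V\<close> by simp
        qed
      next
        case False
        thus ?thesis using h(1,2) by (auto simp: PiE_def extensional_def)
      qed
    qed
  qed
  have "?g ` ?A \<subseteq> Psi \<times> PiE (V - W) (\<lambda>_. {..<n})" by auto
  hence "card (?g ` ?A) \<le> card (Psi \<times> PiE (V - W) (\<lambda>_. {..<n}))"
    using fPsi V by (intro card_mono) (auto intro!: finite_PiE)
  also have "\<dots> = card Psi * n ^ card (V - W)"
    using V by (simp add: card_cartesian_product card_PiE)
  also have "card (V - W) = card V - card W" using WV fW by (simp add: card_Diff_subset)
  finally have "card (?g ` ?A) \<le> card Psi * n ^ (card V - card W)" .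
  thus ?thesis unfolding card_image[OF inj] .
qed


lemma card_bij2:
  assumes "card eH = 2" "card e = 2"
  shows "card {\<phi> \<in> PiE eH (\<lambda>_. X). \<phi> ` eH = e} \<le> 2"
proof -
  obtain a b where ab: "eH = {a, b}" "a \<noteq> b" using assms(1) card_2_iff by metis
  obtain u w where uw: "e = {u, w}" "u \<noteq> w" using assms(2) card_2_iff by metis
  define f1 where "f1 = (\<lambda>x. if x = a then u else if x = b then w else undefined)"
  define f2 where "f2 = (\<lambda>x. if x = a then w else if x = b then u else undefined)"
  have "{\<phi> \<in> PiE eH (\<lambda>_. X). \<phi> ` eH = e} \<subseteq> {f1, f2}"
  proof
    fix \<phi> assume "\<phi> \<in> {\<phi> \<in> PiE eH (\<lambda>_. X). \<phi> ` eH = e}"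
    hence ext: "\<phi> \<in> extensional {a, b}" and im: "{\<phi> a, \<phi> b} = {u, w}" using ab uw by (auto simp: PiE_def)
    have out: "\<phi> x = undefined" if "x \<noteq> a" "x \<noteq> b" for x using ext that by (auto simp: extensional_def)
    show "\<phi> \<in> {f1, f2}"
    proof (cases "\<phi> a = u")
      case True
      hence "\<phi> b = w" using im uw by (metis doubleton_eq_iff)
      hence "\<phi> = f1" using True out ab by (auto simp: f1_def fun_eq_iff)
      thus ?thesis by simp
    next
      case False
      hence "\<phi> a = w" "\<phi> b = u" using im uw by (metis doubleton_eq_iff insertI1 insert_iff)+
      hence "\<phi> = f2" using out ab by (auto simp: f2_def fun_eq_iff)
      thus ?thesis by simp
    qed
  qed
  hence "card {\<phi> \<in> PiE eH (\<lambda>_. X). \<phi> ` eH = e} \<le> card {f1, f2}" by (intro card_mono) auto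
  also have "\<dots> \<le> 2" by (simp add: card_insert_le_m1)
  finally show ?thesis .
qed

context
  fixes V :: "'a set" and E :: "'a set set"
  assumes sb: "strictly_2_balanced V E"
begin

lemma inj_img: "inj_on f V \<Longrightarrow> inj_on (\<lambda>y. f ` y) E"
  using sg[OF sb] by (auto simp: inj_on_def inj_on_image_eq_iff)

lemma img_props:
  assumes "inj_on f V" "f ` V \<subseteq> {..<n}" "Y \<subseteq> E"
  shows "(\<lambda>y. f ` y) ` Y \<subseteq> Kn_edges n" "card ((\<lambda>y. f ` y) ` Y) = card Y"
proof -
  show "(\<lambda>y. f ` y) ` Y \<subseteq> Kn_edges n"
  proof
    fix z assume "z \<in> (\<lambda>y. f ` y) ` Y"
    then obtain y where y: "y \<in> Y" "z = f ` y" by auto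
    have "y \<in> E" using y assms by auto
    hence "y \<subseteq> V" "card y = 2" using sg[OF sb] by auto
    moreover have "inj_on f y" using assms(1) \<open>y \<subseteq> V\<close> by (rule inj_on_subset)
    ultimately show "z \<in> Kn_edges n" using y assms(2) by (auto simp: Kn_edges_def card_image)
  qed
  show "card ((\<lambda>y. f ` y) ` Y) = card Y"
    using inj_img[OF assms(1)] assms(3) by (intro card_image) (rule inj_on_subset)
qed

lemma img_restrict: "Y \<subseteq> E \<Longrightarrow> (\<lambda>y. restrict f V ` y) ` Y = (\<lambda>y. f ` y) ` Y"
  using sg[OF sb] by (intro image_cong refl) (auto simp: restrict_def image_def)

lemma F1_char:
  assumes "B \<in> hshadow (hlink (copies V E n) e)"
  shows "\<exists>f eH gH. inj_on f V \<and> f ` V \<subseteq> {..<n} \<and> eH \<in> E \<and> gH \<in> E \<and> eH \<noteq> gH \<and> f ` eH = e \<and>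
           B = (\<lambda>y. f ` y) ` (E - {eH, gH})"
proof -
  obtain g A' where 1: "B = A' - {g}" "A' \<in> hlink (copies V E n) e" "g \<in> A'"
    using assms unfolding hshadow_def hlink_def by blast
  obtain A where 2: "A' = A - {e}" "A \<in> copies V E n" "e \<in> A" using 1(2) unfolding hlink_def by blast
  obtain f where 3: "A = (\<lambda>y. f ` y) ` E" "inj_on f V" "f ` V \<subseteq> {..<n}" using 2(2) unfolding copies_def by blast
  obtain eH where eH: "eH \<in> E" "e = f ` eH" using 2(3) 3(1) by auto
  obtain gH where gH: "gH \<in> E" "g = f ` gH" using 1 2 3(1) by auto
  have ne: "eH \<noteq> gH" using 1 2 eH gH by auto
  have "B = (\<lambda>y. f ` y) ` E - (\<lambda>y. f ` y) ` {eH, gH}" using 1 2 3 eH gH by auto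
  also have "\<dots> = (\<lambda>y. f ` y) ` (E - {eH, gH})"
    using inj_img[OF 3(2)] eH gH by (intro inj_on_image_set_diff[symmetric]) auto
  finally show ?thesis using 3 eH gH ne by blast
qed

lemma F2_char:
  assumes "B \<in> hshadow (copies_at V E n v)"
  shows "\<exists>f x gH. inj_on f V \<and> f ` V \<subseteq> {..<n} \<and> x \<in> V \<and> f x = v \<and> gH \<in> E \<and>
           B = (\<lambda>y. f ` y) ` (E - {gH})"
proof -
  obtain g A where 1: "B = A - {g}" "A \<in> copies_at V E n v" "g \<in> A"
    using assms unfolding hshadow_def hlink_def by blast
  obtain f where 3: "A = (\<lambda>y. f ` y) ` E" "inj_on f V" "f ` V \<subseteq> {..<n}" using 1(2)
    unfolding copies_at_def copies_def by blast
  have "v \<in> \<Union>A" using 1(2) unfolding copies_at_def by blast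
  then obtain y x where x: "y \<in> E" "x \<in> y" "f x = v" using 3(1) by auto
  have xV: "x \<in> V" using x sg[OF sb] by auto
  obtain gH where gH: "gH \<in> E" "g = f ` gH" using 1 3(1) by auto
  have "B = (\<lambda>y. f ` y) ` E - (\<lambda>y. f ` y) ` {gH}" using 1 3 gH by auto
  also have "\<dots> = (\<lambda>y. f ` y) ` (E - {gH})"
    using inj_img[OF 3(2)] gH by (intro inj_on_image_set_diff[symmetric]) auto
  finally show ?thesis using 3 x xV gH by blast
qed

lemma F1_obt:
  assumes "B \<in> hshadow (hlink (copies V E n) e)"
  obtains f eH gH where "inj_on f V" "f ` V \<subseteq> {..<n}" "eH \<in> E" "gH \<in> E" "eH \<noteq> gH" "f ` eH = e"
           "B = (\<lambda>y. f ` y) ` (E - {eH, gH})"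
  apply (insert F1_char[OF assms]) apply (elim exE conjE) apply (rule that) by assumption+

lemma F2_obt:
  assumes "B \<in> hshadow (copies_at V E n v)"
  obtains f x gH where "inj_on f V" "f ` V \<subseteq> {..<n}" "x \<in> V" "f x = v" "gH \<in> E"
           "B = (\<lambda>y. f ` y) ` (E - {gH})"
  apply (insert F2_char[OF assms]) apply (elim exE conjE) apply (rule that) by assumption+

lemma F1_sub:
  "hshadow (hlink (copies V E n) e) \<subseteq> Pow (Kn_edges n)"
  "\<forall>B\<in>hshadow (hlink (copies V E n) e). card B = card E - 2"
proof -
  show "hshadow (hlink (copies V E n) e) \<subseteq> Pow (Kn_edges n)"
  proof
    fix B assume "B \<in> hshadow (hlink (copies V E n) e)"
    then obtain f eH gH where X: "inj_on f V" "f ` V \<subseteq> {..<n}"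
      "B = (\<lambda>y. f ` y) ` (E - {eH, gH})" by (rule F1_obt)
    show "B \<in> Pow (Kn_edges n)" using img_props(1)[OF X(1,2), of "E - {eH, gH}"] X(3) by auto
  qed
  show "\<forall>B\<in>hshadow (hlink (copies V E n) e). card B = card E - 2"
  proof
    fix B assume "B \<in> hshadow (hlink (copies V E n) e)"
    then obtain f eH gH where X: "inj_on f V" "f ` V \<subseteq> {..<n}" "eH \<in> E" "gH \<in> E" "eH \<noteq> gH"
      "B = (\<lambda>y. f ` y) ` (E - {eH, gH})" by (rule F1_obt)
    have "card B = card (E - {eH, gH})" using img_props(2)[OF X(1,2)] X(6) by auto
    also have "\<dots> = card E - card {eH, gH}" using X finE[OF sb] by (intro card_Diff_subset) auto
    also have "card {eH, gH} = 2" using X by simp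
    finally show "card B = card E - 2" .
  qed
qed

lemma F2_sub:
  "hshadow (copies_at V E n v) \<subseteq> Pow (Kn_edges n)"
  "\<forall>B\<in>hshadow (copies_at V E n v). card B = card E - 1"
proof -
  show "hshadow (copies_at V E n v) \<subseteq> Pow (Kn_edges n)"
  proof
    fix B assume "B \<in> hshadow (copies_at V E n v)"
    then obtain f x gH where X: "inj_on f V" "f ` V \<subseteq> {..<n}"
      "B = (\<lambda>y. f ` y) ` (E - {gH})" by (rule F2_obt)
    show "B \<in> Pow (Kn_edges n)" using img_props(1)[OF X(1,2), of "E - {gH}"] X(3) by auto
  qed
  show "\<forall>B\<in>hshadow (copies_at V E n v). card B = card E - 1"
  proof
    fix B assume "B \<in> hshadow (copies_at V E n v)"
    then obtain f x gH where X: "inj_on f V" "f ` V \<subseteq> {..<n}" "gH \<in> E"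
      "B = (\<lambda>y. f ` y) ` (E - {gH})" by (rule F2_obt)
    have "card B = card (E - {gH})" using img_props(2)[OF X(1,2)] X(4) by auto
    also have "\<dots> = card E - 1" using X finE[OF sb] by (simp add: card_Diff_singleton)
    finally show "card B = card E - 1" .
  qed
qed

end

context
  fixes V :: "'a set" and E :: "'a set set"
  assumes sb: "strictly_2_balanced V E"
begin

lemma restrict_in_PiE: "inj_on f V \<Longrightarrow> f ` V \<subseteq> {..<n} \<Longrightarrow> restrict f V \<in> PiE V (\<lambda>_. {..<n})"
  by auto

lemma F1_card:
  assumes e: "e \<in> Kn_edges n"
  shows "card (hshadow (hlink (copies V E n) e)) \<le> 2 * card E ^ 2 * n ^ (card V - 2)"
proof -
  define Psi where "Psi eH = {\<phi> \<in> PiE eH (\<lambda>_. {..<n}). \<phi> ` eH = e}" for eH :: "'a set"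
  define A where "A eH = {h \<in> PiE V (\<lambda>_. {..<n}). restrict h eH \<in> Psi eH}" for eH :: "'a set"
  define Phi where "Phi c h = (\<lambda>y. h ` y) ` (E - {fst c, snd c})" for c :: "'a set \<times> 'a set" and h :: "'a \<Rightarrow> nat"
  have sub: "hshadow (hlink (copies V E n) e) \<subseteq> (\<Union>c\<in>E \<times> E. Phi c ` A (fst c))"
  proof
    fix B assume "B \<in> hshadow (hlink (copies V E n) e)"
    then obtain f eH gH where X: "inj_on f V" "f ` V \<subseteq> {..<n}" "eH \<in> E" "gH \<in> E" "eH \<noteq> gH" "f ` eH = e"
      "B = (\<lambda>y. f ` y) ` (E - {eH, gH})" by (rule F1_obt[OF sb])
    have eHV: "eH \<subseteq> V" using X sg[OF sb] by auto
    have "restrict (restrict f V) eH = restrict f eH" using eHV by (auto simp: restrict_def fun_eq_iff)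
    moreover have "restrict f eH \<in> Psi eH" using X eHV by (auto simp: Psi_def)
    ultimately have inA: "restrict f V \<in> A eH" using X by (auto simp: A_def)
    have Beq: "B = Phi (eH, gH) (restrict f V)" using X img_restrict[OF sb, of "E - {eH, gH}" f]
      by (auto simp: Phi_def)
    have "B \<in> Phi (eH, gH) ` A (fst (eH, gH))" using Beq inA by simp
    moreover have "(eH, gH) \<in> E \<times> E" using X by simp
    ultimately show "B \<in> (\<Union>c\<in>E \<times> E. Phi c ` A (fst c))" by (rule UN_I[rotated])
  qed
  have cA: "card (A eH) \<le> 2 * n ^ (card V - 2)" if "eH \<in> E" for eH
  proof -
    have "eH \<subseteq> V" "card eH = 2" using that sg[OF sb] by auto
    have "card (A eH) \<le> card (Psi eH) * n ^ (card V - card eH)" unfolding A_def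
      using sg(1)[OF sb] \<open>eH \<subseteq> V\<close> by (intro count_ext) (auto simp: Psi_def)
    also have "card (Psi eH) \<le> 2" unfolding Psi_def using \<open>card eH = 2\<close> e
      by (intro card_bij2) (auto simp: Kn_edges_def)
    finally show ?thesis using \<open>card eH = 2\<close> by simp
  qed
  have fA: "finite (A eH)" for eH
    by (rule finite_subset[of _ "PiE V (\<lambda>_. {..<n})"]) (auto simp: A_def sg(1)[OF sb] finite_PiE)
  have "finite (\<Union>c\<in>E \<times> E. Phi c ` A (fst c))"
    using finE[OF sb] fA by (intro finite_UN_I finite_imageI) auto
  hence "card (hshadow (hlink (copies V E n) e)) \<le> card (\<Union>c\<in>E \<times> E. Phi c ` A (fst c))"
    using sub by (intro card_mono)
  also have "\<dots> \<le> (\<Sum>c\<in>E \<times> E. card (Phi c ` A (fst c)))"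
    using finE[OF sb] by (intro card_UN_le) auto
  also have "\<dots> \<le> (\<Sum>c\<in>E \<times> E. 2 * n ^ (card V - 2))"
  proof (rule sum_mono)
    fix c assume c: "c \<in> E \<times> E"
    have "card (Phi c ` A (fst c)) \<le> card (A (fst c))" by (rule card_image_le) (rule fA)
    also have "\<dots> \<le> 2 * n ^ (card V - 2)" using c cA by auto
    finally show "card (Phi c ` A (fst c)) \<le> 2 * n ^ (card V - 2)" .
  qed
  also have "\<dots> = 2 * card E ^ 2 * n ^ (card V - 2)" by (simp add: card_cartesian_product power2_eq_square)
  finally show ?thesis .
qed

lemma F2_card:
  shows "card (hshadow (copies_at V E n v)) \<le> card V * card E * n ^ (card V - 1)"
proof -
  define Psi where "Psi x = {\<phi> \<in> PiE {x} (\<lambda>_. {..<n}). \<phi> x = v}" for x :: 'a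
  define A where "A x = {h \<in> PiE V (\<lambda>_. {..<n}). restrict h {x} \<in> Psi x}" for x :: 'a
  define Phi where "Phi c h = (\<lambda>y. h ` y) ` (E - {snd c})" for c :: "'a \<times> 'a set" and h :: "'a \<Rightarrow> nat"
  have sub: "hshadow (copies_at V E n v) \<subseteq> (\<Union>c\<in>V \<times> E. Phi c ` A (fst c))"
  proof
    fix B assume "B \<in> hshadow (copies_at V E n v)"
    then obtain f x gH where X: "inj_on f V" "f ` V \<subseteq> {..<n}" "x \<in> V" "f x = v" "gH \<in> E"
      "B = (\<lambda>y. f ` y) ` (E - {gH})" by (rule F2_obt[OF sb])
    have inA: "restrict f V \<in> A x" using X by (auto simp: A_def Psi_def)
    have Beq: "B = Phi (x, gH) (restrict f V)" using X img_restrict[OF sb, of "E - {gH}" f]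
      by (auto simp: Phi_def)
    have "B \<in> Phi (x, gH) ` A (fst (x, gH))" using Beq inA by simp
    moreover have "(x, gH) \<in> V \<times> E" using X by simp
    ultimately show "B \<in> (\<Union>c\<in>V \<times> E. Phi c ` A (fst c))" by (rule UN_I[rotated])
  qed
  have cA: "card (A x) \<le> n ^ (card V - 1)" if "x \<in> V" for x
  proof -
    have "card (A x) \<le> card (Psi x) * n ^ (card V - card {x})" unfolding A_def
      using sg(1)[OF sb] that by (intro count_ext) (auto simp: Psi_def)
    also have "card (Psi x) \<le> 1"
    proof -
      have "Psi x \<subseteq> {restrict (\<lambda>_. v) {x}}"
      proof
        fix \<phi> assume "\<phi> \<in> Psi x"
        hence ph: "\<phi> \<in> extensional {x}" "\<phi> x = v" by (auto simp: Psi_def PiE_def)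
        have "\<phi> = restrict (\<lambda>_. v) {x}"
        proof
          fix y show "\<phi> y = restrict (\<lambda>_. v) {x} y"
            using ph extensional_arb[OF ph(1), of y] by (cases "y = x") auto
        qed
        thus "\<phi> \<in> {restrict (\<lambda>_. v) {x}}" by simp
      qed
      hence "card (Psi x) \<le> card {restrict (\<lambda>_. v) {x}}" by (intro card_mono) auto
      thus ?thesis by simp
    qed
    finally show ?thesis by simp
  qed
  have fA: "finite (A x)" for x
    by (rule finite_subset[of _ "PiE V (\<lambda>_. {..<n})"]) (auto simp: A_def sg(1)[OF sb] finite_PiE)
  have "finite (\<Union>c\<in>V \<times> E. Phi c ` A (fst c))"
    using finE[OF sb] sg(1)[OF sb] fA by (intro finite_UN_I finite_imageI) auto
  hence "card (hshadow (copies_at V E n v)) \<le> card (\<Union>c\<in>V \<times> E. Phi c ` A (fst c))"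
    using sub by (intro card_mono)
  also have "\<dots> \<le> (\<Sum>c\<in>V \<times> E. card (Phi c ` A (fst c)))"
    using finE[OF sb] sg(1)[OF sb] by (intro card_UN_le) auto
  also have "\<dots> \<le> (\<Sum>c\<in>V \<times> E. n ^ (card V - 1))"
  proof (rule sum_mono)
    fix c assume c: "c \<in> V \<times> E"
    have "card (Phi c ` A (fst c)) \<le> card (A (fst c))" by (rule card_image_le) (rule fA)
    also have "\<dots> \<le> n ^ (card V - 1)" using c cA by auto
    finally show "card (Phi c ` A (fst c)) \<le> n ^ (card V - 1)" .
  qed
  also have "\<dots> = card V * card E * n ^ (card V - 1)" by (simp add: card_cartesian_product)
  finally show ?thesis .
qed

end

context
  fixes V :: "'a set" and E :: "'a set set"
  assumes sb: "strictly_2_balanced V E"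
begin

lemma card_Union_edges:
  assumes "T \<subseteq> Kn_edges n" shows "card (\<Union>T) \<le> 2 * card T"
proof -
  have fT: "finite T" using assms finite_Kn finite_subset by blast
  have "card (\<Union>T) \<le> (\<Sum>t\<in>T. card t)" by (rule card_Union_le_sum_card)
  also have "\<dots> = (\<Sum>t\<in>T. 2)" using assms by (intro sum.cong) (auto simp: Kn_edges_def)
  finally show ?thesis by simp
qed

lemma F1_D:
  assumes e: "e \<in> Kn_edges n" and T: "T \<noteq> {}" "card T \<le> card E - 2"
    and n: "real n \<ge> 1" and p: "p > 0" and pl: "real n powr (-1 / m2 V E) \<le> p"
  shows "real (card {B \<in> hshadow (hlink (copies V E n) e). T \<subseteq> B}) * p ^ (card E - 2 - card T)
         \<le> real (card E ^ 2 * 2 ^ card E * (2 * card E) ^ card V) * real n powr (- del V E)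
            * (real n ^ (card V - 2) * p ^ (card E - 2))"
    (is "real (card ?L) * _ \<le> ?R")
proof (cases "?L = {}")
  case True
  have R0: "?R \<ge> 0" using p by simp
  have "card ?L = 0" by (simp only: True card.empty)
  thus ?thesis using R0 by simp
next
  case False
  let ?F = "hshadow (hlink (copies V E n) e)"
  let ?s = "card E - 2" and ?v = "card V" and ?e = "card E" and ?m = "m2 V E"
  obtain B0 where B0: "B0 \<in> ?F" "T \<subseteq> B0" using False by auto
  have TK: "T \<subseteq> Kn_edges n" using B0 F1_sub(1)[OF sb] by blast
  have fT: "finite T" using TK finite_Kn finite_subset by blast
  have fV: "finite V" using sg(1)[OF sb] .
  have fE: "finite E" using finE[OF sb] .
  have mpos: "?m > 0" using m2_pos[OF sb] .
  define Conf where "Conf = {(eH, gH, TH). eH \<in> E \<and> gH \<in> E \<and> eH \<noteq> gH \<and> TH \<subseteq> E - {eH, gH} \<and> TH \<noteq> {} \<and> card TH = card T}"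
  define Wf where "Wf c = \<Union>(snd (snd c)) \<union> fst c" for c :: "'a set \<times> 'a set \<times> 'a set set"
  define S where "S = (\<Union>T \<union> e) \<inter> {..<n}"
  define A where "A c = {h \<in> PiE V (\<lambda>_. {..<n}). restrict h (Wf c) \<in> PiE (Wf c) (\<lambda>_. S)}" for c
  define Phi where "Phi c h = (\<lambda>y. h ` y) ` (E - {fst c, fst (snd c)})" for c :: "'a set \<times> 'a set \<times> 'a set set" and h :: "'a \<Rightarrow> nat"
  have ConfE: "eH \<in> E" "gH \<in> E" "eH \<noteq> gH" "TH \<subseteq> E - {eH, gH}" "TH \<noteq> {}" "card TH = card T"
    if "(eH, gH, TH) \<in> Conf" for eH gH TH using that by (auto simp: Conf_def)
  have fConf: "finite Conf" and cConf: "card Conf \<le> ?e ^ 2 * 2 ^ ?e"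
  proof -
    have sub: "Conf \<subseteq> E \<times> E \<times> Pow E" by (auto simp: Conf_def)
    show "finite Conf" using sub fE by (meson finite_Pow_iff finite_SigmaI finite_subset)
    have "card Conf \<le> card (E \<times> E \<times> Pow E)" using sub fE by (intro card_mono) auto
    also have "\<dots> = ?e ^ 2 * 2 ^ ?e" using fE by (simp add: card_cartesian_product card_Pow power2_eq_square)
    finally show "card Conf \<le> ?e ^ 2 * 2 ^ ?e" .
  qed
  have WV: "Wf c \<subseteq> V" if "c \<in> Conf" for c
    using that sg(2)[OF sb] by (cases c) (auto simp: Conf_def Wf_def)
  have fA: "finite (A c)" for c
    by (rule finite_subset[of _ "PiE V (\<lambda>_. {..<n})"]) (auto simp: A_def fV finite_PiE)
  have sub: "?L \<subseteq> (\<Union>c\<in>Conf. Phi c ` A c)"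
  proof
    fix B assume "B \<in> ?L"
    hence BF: "B \<in> ?F" and TB: "T \<subseteq> B" by auto
    obtain f eH gH where X: "inj_on f V" "f ` V \<subseteq> {..<n}" "eH \<in> E" "gH \<in> E" "eH \<noteq> gH" "f ` eH = e"
      "B = (\<lambda>y. f ` y) ` (E - {eH, gH})" using BF by (rule F1_obt[OF sb])
    define TH where "TH = {y \<in> E - {eH, gH}. f ` y \<in> T}"
    have imTH: "(\<lambda>y. f ` y) ` TH = T"
    proof
      show "(\<lambda>y. f ` y) ` TH \<subseteq> T" by (auto simp: TH_def)
      show "T \<subseteq> (\<lambda>y. f ` y) ` TH"
      proof
        fix t assume "t \<in> T"
        hence "t \<in> (\<lambda>y. f ` y) ` (E - {eH, gH})" using TB X(7) by blast
        then obtain y where "y \<in> E - {eH, gH}" "t = f ` y" by (rule imageE) simp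
        thus "t \<in> (\<lambda>y. f ` y) ` TH" using \<open>t \<in> T\<close> by (auto simp: TH_def)
      qed
    qed
    have THE: "TH \<subseteq> E - {eH, gH}" by (auto simp: TH_def)
    have "TH \<subseteq> E" using THE by auto
    with inj_img[OF sb X(1)] have "inj_on (\<lambda>y. f ` y) TH" by (rule inj_on_subset)
    hence "card ((\<lambda>y. f ` y) ` TH) = card TH" by (rule card_image)
    hence cTH: "card TH = card T" using imTH by simp
    have THne: "TH \<noteq> {}" using imTH T by auto
    have c: "(eH, gH, TH) \<in> Conf" using X THE cTH THne by (auto simp: Conf_def)
    have WV': "Wf (eH, gH, TH) \<subseteq> V" using WV[OF c] .
    have "restrict f V \<in> A (eH, gH, TH)"
    proof -
      have "restrict (restrict f V) (Wf (eH, gH, TH)) \<in> PiE (Wf (eH, gH, TH)) (\<lambda>_. S)"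
      proof (rule restrict_PiE_iff[THEN iffD2], intro ballI)
        fix x assume x: "x \<in> Wf (eH, gH, TH)"
        have xV: "x \<in> V" using x WV' by auto
        have "f x \<in> \<Union>T \<union> e"
        proof (cases "x \<in> eH")
          case True thus ?thesis using X(6) by auto
        next
          case False
          then obtain y where "y \<in> TH" "x \<in> y" using x by (auto simp: Wf_def)
          thus ?thesis using imTH by blast
        qed
        moreover have "f x < n" using X(2) xV by auto
        ultimately show "restrict f V x \<in> S" using xV by (simp add: S_def)
      qed
      moreover have "restrict f V \<in> PiE V (\<lambda>_. {..<n})" using X(2) by auto
      ultimately show ?thesis unfolding A_def by (intro CollectI conjI)
    qed
    moreover have "B = Phi (eH, gH, TH) (restrict f V)" using X img_restrict[OF sb, of "E - {eH, gH}" f]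
      by (auto simp: Phi_def)
    ultimately have "B \<in> Phi (eH, gH, TH) ` A (eH, gH, TH)" by simp
    thus "B \<in> (\<Union>c\<in>Conf. Phi c ` A c)" using c by (rule UN_I[rotated])
  qed
  have cS: "card S \<le> 2 * ?e"
  proof -
    have "card S \<le> card (\<Union>T \<union> e)" unfolding S_def using fT TK e
      by (intro card_mono) (auto simp: Kn_edges_def intro: finite_subset)
    also have "\<dots> \<le> card (\<Union>T) + card e" by (rule card_Un_le)
    also have "\<dots> \<le> 2 * card T + 2" using card_Union_edges[OF TK] e by (auto simp: Kn_edges_def)
    also have "\<dots> \<le> 2 * ?e" using T(2) sg(4)[OF sb] by linarith
    finally show ?thesis .
  qed
  have fS: "finite S" by (simp add: S_def)
  have cA: "real (card (A c)) \<le> real ((2 * ?e) ^ ?v) * real n ^ (?v - card (Wf c))" if c: "c \<in> Conf" for c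
  proof -
    have "card (A c) \<le> card (PiE (Wf c) (\<lambda>_. S)) * n ^ (?v - card (Wf c))"
      unfolding A_def using fV WV[OF c] by (intro count_ext) (auto simp: S_def)
    also have "card (PiE (Wf c) (\<lambda>_. S)) = card S ^ card (Wf c)"
      using WV[OF c] fV by (simp add: card_PiE finite_subset)
    also have "card S ^ card (Wf c) \<le> (2 * ?e) ^ card (Wf c)" using cS by (rule power_mono) simp
    also have "\<dots> \<le> (2 * ?e) ^ ?v" using sg(4)[OF sb] WV[OF c] fV by (intro power_increasing card_mono) auto
    finally have "card (A c) \<le> (2 * ?e) ^ ?v * n ^ (?v - card (Wf c))" by (simp add: mult_right_mono)
    thus ?thesis by (metis of_nat_le_iff of_nat_mult of_nat_power)
  qed
  have key: "real n ^ (?v - card (Wf c)) * p ^ (?s - card T) \<le> real n powr (- del V E) * (real n ^ (?v - 2) * p ^ ?s)"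
    if c: "c \<in> Conf" for c
  proof -
    obtain eH gH TH where ceq: "c = (eH, gH, TH)" by (cases c)
    note CE = ConfE[OF c[unfolded ceq]]
    have lt: "real (card TH) < ?m * (real (card (Wf c)) - 2)" and w3: "card (Wf c) \<ge> 3"
      using sg1[OF sb CE(1-5)] by (auto simp: ceq Wf_def)
    have wv: "card (Wf c) \<le> ?v" using WV[OF c] fV by (rule card_mono[rotated])
    have pos: "0 < real (card (Wf c)) - real (2::nat) - real (card T) / ?m"
      using lt mpos CE(6) by (simp add: divide_less_eq mult.commute)
    have "del V E \<le> real (card (Wf c)) - real (2::nat) - real (card T) / ?m"
      using wv T(2) pos by (intro del_props(3)) auto
    thus ?thesis using K1[OF mpos n p pl T(2) wv _ ] w3 by simp
  qed
  have "real (card ?L) \<le> real (card (\<Union>c\<in>Conf. Phi c ` A c))"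
    using sub fConf fA by (intro of_nat_mono card_mono) auto
  also have "\<dots> \<le> real (\<Sum>c\<in>Conf. card (Phi c ` A c))"
    using fConf by (intro of_nat_mono card_UN_le)
  also have "\<dots> \<le> (\<Sum>c\<in>Conf. real (card (A c)))"
    unfolding of_nat_sum by (intro sum_mono of_nat_mono card_image_le fA)
  finally have L1: "real (card ?L) \<le> (\<Sum>c\<in>Conf. real (card (A c)))" .
  have "real (card ?L) * p ^ (?s - card T) \<le> (\<Sum>c\<in>Conf. real (card (A c))) * p ^ (?s - card T)"
    using L1 p by (intro mult_right_mono) auto
  also have "\<dots> = (\<Sum>c\<in>Conf. real (card (A c)) * p ^ (?s - card T))" by (simp add: sum_distrib_right)
  also have "\<dots> \<le> (\<Sum>c\<in>Conf. real ((2 * ?e) ^ ?v) * (real n powr (- del V E) * (real n ^ (?v - 2) * p ^ ?s)))"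
  proof (rule sum_mono)
    fix c assume c: "c \<in> Conf"
    have "real (card (A c)) * p ^ (?s - card T) \<le> real ((2 * ?e) ^ ?v) * real n ^ (?v - card (Wf c)) * p ^ (?s - card T)"
      using cA[OF c] p by (intro mult_right_mono) auto
    also have "\<dots> = real ((2 * ?e) ^ ?v) * (real n ^ (?v - card (Wf c)) * p ^ (?s - card T))" by simp
    also have "\<dots> \<le> real ((2 * ?e) ^ ?v) * (real n powr (- del V E) * (real n ^ (?v - 2) * p ^ ?s))"
      using key[OF c] by (intro mult_left_mono) auto
    finally show "real (card (A c)) * p ^ (?s - card T) \<le> real ((2 * ?e) ^ ?v) * (real n powr (- del V E) * (real n ^ (?v - 2) * p ^ ?s))" .
  qed
  also have "\<dots> = real (card Conf) * real ((2 * ?e) ^ ?v) * (real n powr (- del V E) * (real n ^ (?v - 2) * p ^ ?s))"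
    by simp
  also have "\<dots> \<le> real (?e ^ 2 * 2 ^ ?e) * real ((2 * ?e) ^ ?v) * (real n powr (- del V E) * (real n ^ (?v - 2) * p ^ ?s))"
  proof -
    have "real (card Conf) \<le> real (?e ^ 2 * 2 ^ ?e)" using cConf by (simp only: of_nat_le_iff)
    thus ?thesis using p by (intro mult_right_mono) auto
  qed
  also have "\<dots> = ?R" by (simp add: algebra_simps)
  finally show ?thesis .
qed

lemma F2_D_big:
  assumes e3: "card E \<ge> 3" and T: "T \<noteq> {}" "card T \<le> card E - 1"
    and n: "real n \<ge> 1" and p: "p > 0" and pl: "real n powr (-1 / m2 V E) \<le> p"
  shows "real (card {B \<in> hshadow (copies_at V E n v). T \<subseteq> B}) * p ^ (card E - 1 - card T)
         \<le> real (card V * card E * 2 ^ card E * (2 * card E + 1) ^ card V) * real n powr (- del V E)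
            * (real n ^ (card V - 1) * p ^ (card E - 1))"
    (is "real (card ?L) * _ \<le> ?R")
proof (cases "?L = {}")
  case True
  have R0: "?R \<ge> 0" using p by simp
  have "card ?L = 0" by (simp only: True card.empty)
  thus ?thesis using R0 by simp
next
  case False
  let ?F = "hshadow (copies_at V E n v)"
  let ?s = "card E - 1" and ?v = "card V" and ?e = "card E" and ?m = "m2 V E"
  obtain B0 where B0: "B0 \<in> ?F" "T \<subseteq> B0" using False by auto
  have TK: "T \<subseteq> Kn_edges n" using B0 F2_sub(1)[OF sb] by blast
  have fT: "finite T" using TK finite_Kn finite_subset by blast
  have fV: "finite V" using sg(1)[OF sb] .
  have fE: "finite E" using finE[OF sb] .
  have gt1: "?m > 1" using m2_gt1[OF sb e3] .
  have mpos: "?m > 0" using gt1 by simp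
  define Conf where "Conf = {(x, gH, TH). x \<in> V \<and> gH \<in> E \<and> TH \<subseteq> E - {gH} \<and> TH \<noteq> {} \<and> card TH = card T}"
  define Wf where "Wf c = \<Union>(snd (snd c)) \<union> {fst c}" for c :: "'a \<times> 'a set \<times> 'a set set"
  define S where "S = (\<Union>T \<union> {v}) \<inter> {..<n}"
  define A where "A c = {h \<in> PiE V (\<lambda>_. {..<n}). restrict h (Wf c) \<in> PiE (Wf c) (\<lambda>_. S)}" for c
  define Phi where "Phi c h = (\<lambda>y. h ` y) ` (E - {fst (snd c)})" for c :: "'a \<times> 'a set \<times> 'a set set" and h :: "'a \<Rightarrow> nat"
  have ConfE: "x \<in> V" "gH \<in> E" "TH \<subseteq> E - {gH}" "TH \<noteq> {}" "card TH = card T"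
    if "(x, gH, TH) \<in> Conf" for x gH TH using that by (auto simp: Conf_def)
  have fConf: "finite Conf" and cConf: "card Conf \<le> ?v * ?e * 2 ^ ?e"
  proof -
    have sub: "Conf \<subseteq> V \<times> E \<times> Pow E" by (auto simp: Conf_def)
    show "finite Conf" using sub fE fV by (meson finite_Pow_iff finite_SigmaI finite_subset)
    have "card Conf \<le> card (V \<times> E \<times> Pow E)" using sub fE fV by (intro card_mono) auto
    also have "\<dots> = ?v * ?e * 2 ^ ?e" using fE by (simp add: card_cartesian_product card_Pow)
    finally show "card Conf \<le> ?v * ?e * 2 ^ ?e" .
  qed
  have WV: "Wf c \<subseteq> V" if "c \<in> Conf" for c
    using that sg(2)[OF sb] by (cases c) (auto simp: Conf_def Wf_def)
  have fA: "finite (A c)" for c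
    by (rule finite_subset[of _ "PiE V (\<lambda>_. {..<n})"]) (auto simp: A_def fV finite_PiE)
  have sub: "?L \<subseteq> (\<Union>c\<in>Conf. Phi c ` A c)"
  proof
    fix B assume "B \<in> ?L"
    hence BF: "B \<in> ?F" and TB: "T \<subseteq> B" by auto
    obtain f x gH where X: "inj_on f V" "f ` V \<subseteq> {..<n}" "x \<in> V" "f x = v" "gH \<in> E"
      "B = (\<lambda>y. f ` y) ` (E - {gH})" using BF by (rule F2_obt[OF sb])
    define TH where "TH = {y \<in> E - {gH}. f ` y \<in> T}"
    have imTH: "(\<lambda>y. f ` y) ` TH = T"
    proof
      show "(\<lambda>y. f ` y) ` TH \<subseteq> T" by (auto simp: TH_def)
      show "T \<subseteq> (\<lambda>y. f ` y) ` TH"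
      proof
        fix t assume "t \<in> T"
        hence "t \<in> (\<lambda>y. f ` y) ` (E - {gH})" using TB X(6) by blast
        then obtain y where "y \<in> E - {gH}" "t = f ` y" by (rule imageE) simp
        thus "t \<in> (\<lambda>y. f ` y) ` TH" using \<open>t \<in> T\<close> by (auto simp: TH_def)
      qed
    qed
    have THE: "TH \<subseteq> E - {gH}" by (auto simp: TH_def)
    have "TH \<subseteq> E" using THE by auto
    with inj_img[OF sb X(1)] have "inj_on (\<lambda>y. f ` y) TH" by (rule inj_on_subset)
    hence "card ((\<lambda>y. f ` y) ` TH) = card TH" by (rule card_image)
    hence cTH: "card TH = card T" using imTH by simp
    have THne: "TH \<noteq> {}" using imTH T by auto
    have c: "(x, gH, TH) \<in> Conf" using X THE cTH THne by (auto simp: Conf_def)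
    have WV': "Wf (x, gH, TH) \<subseteq> V" using WV[OF c] .
    have "restrict f V \<in> A (x, gH, TH)"
    proof -
      have "restrict (restrict f V) (Wf (x, gH, TH)) \<in> PiE (Wf (x, gH, TH)) (\<lambda>_. S)"
      proof (rule restrict_PiE_iff[THEN iffD2], intro ballI)
        fix z assume z: "z \<in> Wf (x, gH, TH)"
        have zV: "z \<in> V" using z WV' by auto
        have "f z \<in> \<Union>T \<union> {v}"
        proof (cases "z = x")
          case True thus ?thesis using X(4) by auto
        next
          case False
          then obtain y where "y \<in> TH" "z \<in> y" using z by (auto simp: Wf_def)
          thus ?thesis using imTH by blast
        qed
        moreover have "f z < n" using X(2) zV by auto
        ultimately show "restrict f V z \<in> S" using zV by (simp add: S_def)
      qed
      moreover have "restrict f V \<in> PiE V (\<lambda>_. {..<n})" using X(2) by auto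
      ultimately show ?thesis unfolding A_def by (intro CollectI conjI)
    qed
    moreover have "B = Phi (x, gH, TH) (restrict f V)" using X img_restrict[OF sb, of "E - {gH}" f]
      by (auto simp: Phi_def)
    ultimately have "B \<in> Phi (x, gH, TH) ` A (x, gH, TH)" by simp
    thus "B \<in> (\<Union>c\<in>Conf. Phi c ` A c)" using c by (rule UN_I[rotated])
  qed
  have cS: "card S \<le> 2 * ?e + 1"
  proof -
    have "card S \<le> card (\<Union>T \<union> {v})" unfolding S_def using fT TK
      by (intro card_mono) (auto simp: Kn_edges_def intro: finite_subset)
    also have "\<dots> \<le> card (\<Union>T) + card {v}" by (rule card_Un_le)
    also have "\<dots> \<le> 2 * card T + 1" using card_Union_edges[OF TK] by auto
    also have "\<dots> \<le> 2 * ?e + 1" using T(2) sg(4)[OF sb] by linarith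
    finally show ?thesis .
  qed
  have fS: "finite S" by (simp add: S_def)
  have cA: "real (card (A c)) \<le> real ((2 * ?e + 1) ^ ?v) * real n ^ (?v - card (Wf c))" if c: "c \<in> Conf" for c
  proof -
    have "card (A c) \<le> card (PiE (Wf c) (\<lambda>_. S)) * n ^ (?v - card (Wf c))"
      unfolding A_def using fV WV[OF c] by (intro count_ext) (auto simp: S_def)
    also have "card (PiE (Wf c) (\<lambda>_. S)) = card S ^ card (Wf c)"
      using WV[OF c] fV by (simp add: card_PiE finite_subset)
    also have "card S ^ card (Wf c) \<le> (2 * ?e + 1) ^ card (Wf c)" using cS by (rule power_mono) simp
    also have "\<dots> \<le> (2 * ?e + 1) ^ ?v" using sg(4)[OF sb] WV[OF c] fV by (intro power_increasing card_mono) auto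
    finally have "card (A c) \<le> (2 * ?e + 1) ^ ?v * n ^ (?v - card (Wf c))" by (simp add: mult_right_mono)
    thus ?thesis by (metis of_nat_le_iff of_nat_mult of_nat_power)
  qed
  have key: "real n ^ (?v - card (Wf c)) * p ^ (?s - card T) \<le> real n powr (- del V E) * (real n ^ (?v - 1) * p ^ ?s)"
    if c: "c \<in> Conf" for c
  proof -
    obtain x gH TH where ceq: "c = (x, gH, TH)" by (cases c)
    note CE = ConfE[OF c[unfolded ceq]]
    have lt: "real (card TH) < ?m * (real (card (Wf c)) - 1)"
      using sg2[OF sb gt1 CE(2-4) CE(1)] by (auto simp: ceq Wf_def)
    have w1: "card (Wf c) \<ge> 1" using WV[OF c] fV by (auto simp: ceq Wf_def card_gt_0_iff Suc_le_eq intro: finite_subset)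
    have wv: "card (Wf c) \<le> ?v" using WV[OF c] fV by (rule card_mono[rotated])
    have pos: "0 < real (card (Wf c)) - real (1::nat) - real (card T) / ?m"
      using lt mpos CE(5) by (simp add: divide_less_eq mult.commute)
    have "del V E \<le> real (card (Wf c)) - real (1::nat) - real (card T) / ?m"
      using wv T(2) pos by (intro del_props(3)) auto
    thus ?thesis using K1[OF mpos n p pl T(2) wv _ ] w1 by simp
  qed
  have "real (card ?L) \<le> real (card (\<Union>c\<in>Conf. Phi c ` A c))"
    using sub fConf fA by (intro of_nat_mono card_mono) auto
  also have "\<dots> \<le> real (\<Sum>c\<in>Conf. card (Phi c ` A c))"
    using fConf by (intro of_nat_mono card_UN_le)
  also have "\<dots> \<le> (\<Sum>c\<in>Conf. real (card (A c)))"
    unfolding of_nat_sum by (intro sum_mono of_nat_mono card_image_le fA)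
  finally have L1: "real (card ?L) \<le> (\<Sum>c\<in>Conf. real (card (A c)))" .
  have "real (card ?L) * p ^ (?s - card T) \<le> (\<Sum>c\<in>Conf. real (card (A c))) * p ^ (?s - card T)"
    using L1 p by (intro mult_right_mono) auto
  also have "\<dots> = (\<Sum>c\<in>Conf. real (card (A c)) * p ^ (?s - card T))" by (simp add: sum_distrib_right)
  also have "\<dots> \<le> (\<Sum>c\<in>Conf. real ((2 * ?e + 1) ^ ?v) * (real n powr (- del V E) * (real n ^ (?v - 1) * p ^ ?s)))"
  proof (rule sum_mono)
    fix c assume c: "c \<in> Conf"
    have "real (card (A c)) * p ^ (?s - card T) \<le> real ((2 * ?e + 1) ^ ?v) * real n ^ (?v - card (Wf c)) * p ^ (?s - card T)"
      using cA[OF c] p by (intro mult_right_mono) auto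
    also have "\<dots> = real ((2 * ?e + 1) ^ ?v) * (real n ^ (?v - card (Wf c)) * p ^ (?s - card T))" by simp
    also have "\<dots> \<le> real ((2 * ?e + 1) ^ ?v) * (real n powr (- del V E) * (real n ^ (?v - 1) * p ^ ?s))"
      using key[OF c] by (intro mult_left_mono) auto
    finally show "real (card (A c)) * p ^ (?s - card T) \<le> real ((2 * ?e + 1) ^ ?v) * (real n powr (- del V E) * (real n ^ (?v - 1) * p ^ ?s))" .
  qed
  also have "\<dots> = real (card Conf) * real ((2 * ?e + 1) ^ ?v) * (real n powr (- del V E) * (real n ^ (?v - 1) * p ^ ?s))"
    by simp
  also have "\<dots> \<le> real (?v * ?e * 2 ^ ?e) * real ((2 * ?e + 1) ^ ?v) * (real n powr (- del V E) * (real n ^ (?v - 1) * p ^ ?s))"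
  proof -
    have "real (card Conf) \<le> real (?v * ?e * 2 ^ ?e)" using cConf by (simp only: of_nat_le_iff)
    thus ?thesis using p by (intro mult_right_mono) auto
  qed
  also have "\<dots> = ?R" by (simp add: algebra_simps)
  finally show ?thesis .
qed

end

lemma final_step:
  fixes p M0 Y c :: real
  assumes p: "0 < p" "p \<le> 1" and F: "F \<subseteq> Pow (Kn_edges n)" and sz: "\<forall>B\<in>F. card B = s"
    and M: "real (card F) * p^s \<le> M0"
    and D: "\<forall>T. T \<noteq> {} \<longrightarrow> card T \<le> s \<longrightarrow> real (card {B\<in>F. T \<subseteq> B}) * p^(s - card T) \<le> c * Y"
    and c: "c \<ge> 0" and Y: "0 \<le> Y" "Y \<le> M0" and M0: "M0 > 0" and t: "t = 2 * M0"
    and asy: "((1 + real ((K * s)^s) * c) / 2) ^ K \<le> b"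
  shows "measure_pmf.prob (Gnp n p) {G. real (card (hrestrict F G)) \<ge> t} \<le> b"
proof -
  have "measure_pmf.prob (Gnp n p) {G. real (card (hrestrict F G)) \<ge> t}
          \<le> ((M0 + real ((K * s)^s) * (c * Y)) / t) ^ K"
    using t M0 c Y by (intro moment_tail[OF p F sz M D]) auto
  also have "\<dots> \<le> ((1 + real ((K * s)^s) * c) / 2) ^ K"
  proof (rule power_mono)
    have "real ((K * s)^s) * (c * Y) \<le> real ((K * s)^s) * (c * M0)"
      using c Y by (intro mult_left_mono) auto
    hence "(M0 + real ((K * s)^s) * (c * Y)) / t \<le> (M0 + real ((K * s)^s) * (c * M0)) / (2 * M0)"
      unfolding t using M0 by (intro divide_right_mono) auto
    also have "\<dots> = (1 + real ((K * s)^s) * c) / 2" using M0 by (simp add: field_simps)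
    finally show "(M0 + real ((K * s)^s) * (c * Y)) / t \<le> (1 + real ((K * s)^s) * c) / 2" .
    show "0 \<le> (M0 + real ((K * s)^s) * (c * Y)) / t" using t M0 c Y by simp
  qed
  also have "\<dots> \<le> b" by (rule asy)
  finally show ?thesis .
qed

context
  fixes V :: "'a set" and E :: "'a set set"
  assumes sb: "strictly_2_balanced V E"
begin

lemma F2_D_two:
  assumes e2: "card E = 2" and T: "T \<noteq> {}" "card T \<le> card E - 1"
    and n: "real n \<ge> 1" and p: "p > 0" and pl: "real n powr (-1 / m2 V E) \<le> p"
  shows "real (card {B \<in> hshadow (copies_at V E n v). T \<subseteq> B}) * p ^ (card E - 1 - card T)
         \<le> real (card V * card E * 2 ^ card E * (2 * card E + 1) ^ card V) * real n powr (- del V E)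
            * (real n ^ (card V - 1) * p ^ (card E - 1))"
    (is "real (card ?L) * _ \<le> ?R")
proof -
  let ?F = "hshadow (copies_at V E n v)"
  have R0: "?R \<ge> 0" using p by simp
  show ?thesis
  proof (cases "?L = {}")
    case True
    have "card ?L = 0" by (simp only: True card.empty)
    thus ?thesis using R0 by simp
  next
    case False
    then obtain B0 where B0: "B0 \<in> ?F" "T \<subseteq> B0" by auto
    have szF: "\<forall>B\<in>?F. card B = 1" using F2_sub(2)[OF sb] e2 by simp
    have finB: "finite B" if "B \<in> ?F" for B using szF that by (metis card.infinite zero_neq_one)
    have fT: "finite T" using B0 finB finite_subset by blast
    have cT: "card T = 1"
    proof -
      have "card T \<le> 1" using T e2 by simp
      moreover have "card T \<ge> 1" using fT T by (simp add: Suc_le_eq card_gt_0_iff)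
      ultimately show ?thesis by simp
    qed
    have "?L \<subseteq> {T}"
    proof
      fix B assume B: "B \<in> ?L"
      hence "T = B" using szF finB cT by (intro card_subset_eq) auto
      thus "B \<in> {T}" by simp
    qed
    hence "card ?L \<le> card {T}" by (intro card_mono) auto
    hence cL: "card ?L \<le> 1" by simp
    have LHS: "real (card ?L) * p ^ (card E - 1 - card T) \<le> 1" using cL cT e2 by simp
    have m2e: "m2 V E = 1 / (real (card V) - 2)" using m2_eq[OF sb] e2 by (simp add: d2_def)
    have v3: "card V \<ge> 3" using cardV3[OF sb] .
    have im: "real (1::nat) / m2 V E = real (card V) - 2" using m2e v3 by simp
    have mpos: "m2 V E > 0" using m2_pos[OF sb] .
    have "del V E \<le> real (card V) - real (1::nat) - real (1::nat) / m2 V E"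
      using del_props(2)[of V E] im by simp
    hence "real n ^ (card V - card V) * p ^ (1 - 1) \<le> real n powr (- del V E) * (real n ^ (card V - 1) * p ^ 1)"
      using v3 by (intro K1[OF mpos n p pl]) auto
    hence one: "1 \<le> real n powr (- del V E) * (real n ^ (card V - 1) * p ^ (card E - 1))" using e2 by simp
    have "(1::nat) \<le> card V * card E * 2 ^ card E * (2 * card E + 1) ^ card V"
      using v3 e2 by (simp add: Suc_le_eq)
    hence C1: "1 \<le> real (card V * card E * 2 ^ card E * (2 * card E + 1) ^ card V)"
      by (metis of_nat_1 of_nat_le_iff)
    have "1 \<le> ?R"
      using mult_mono[OF C1 one] by (simp add: mult.assoc)
    thus ?thesis using LHS by linarith
  qed
qed

lemma F2_D:
  assumes T: "T \<noteq> {}" "card T \<le> card E - 1"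
    and n: "real n \<ge> 1" and p: "p > 0" and pl: "real n powr (-1 / m2 V E) \<le> p"
  shows "real (card {B \<in> hshadow (copies_at V E n v). T \<subseteq> B}) * p ^ (card E - 1 - card T)
         \<le> real (card V * card E * 2 ^ card E * (2 * card E + 1) ^ card V) * real n powr (- del V E)
            * (real n ^ (card V - 1) * p ^ (card E - 1))"
proof (cases "card E \<ge> 3")
  case True thus ?thesis using F2_D_big[OF sb True T n p pl] by simp
next
  case False
  hence e2: "card E = 2" using sg(4)[OF sb] by simp
  show ?thesis using F2_D_two[OF e2 T n p pl] by simp
qed

end


theorem mainTheorem8:
  fixes V :: "'a set" and E :: "'a set set"
  assumes "strictly_2_balanced V E"
  shows "\<exists>N. \<forall>n\<ge>N. \<forall>p::real. real n powr (- 1 / m2 V E) \<le> p \<and> p \<le> 1 \<longrightarrow>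
     (\<forall>e\<in>Kn_edges n.
        measure_pmf.prob (Gnp n p)
          {G. real (card (hrestrict (hshadow (hlink (copies V E n) e)) G))
                \<ge> 4 * real (card E) ^ 2 * real n ^ (card V - 2) * p ^ (card E - 2)}
        \<le> real n powr (-6)) \<and>
     (\<forall>v<n.
        measure_pmf.prob (Gnp n p)
          {G. real (card (hrestrict (hshadow (copies_at V E n v)) G))
                \<ge> 2 * real (card V) * real (card E) * real n ^ (card V - 1) * p ^ (card E - 1)}
        \<le> real n powr (-6))"
proof -
  note sb = assms
  define d where "d = del V E"
  have d: "d > 0" by (simp add: d_def del_props)
  define C1 where "C1 = real (card E ^ 2 * 2 ^ card E * (2 * card E) ^ card V)"
  define C2 where "C2 = real (card V * card E * 2 ^ card E * (2 * card E + 1) ^ card V)"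
  have C1: "C1 \<ge> 0" and C2: "C2 \<ge> 0" by (simp_all add: C1_def C2_def)
  obtain N1 where N1: "\<forall>n\<ge>N1. \<exists>K. ((1 + real ((K * (card E - 2))^(card E - 2)) * C1 * real n powr (-d)) / 2) ^ K \<le> real n powr (-6)"
    using asymp_K[OF d C1, of "card E - 2"] by blast
  obtain N2 where N2: "\<forall>n\<ge>N2. \<exists>K. ((1 + real ((K * (card E - 1))^(card E - 1)) * C2 * real n powr (-d)) / 2) ^ K \<le> real n powr (-6)"
    using asymp_K[OF d C2, of "card E - 1"] by blast
  have e2: "card E \<ge> 2" using sg(4)[OF sb] .
  have v3: "card V \<ge> 3" using cardV3[OF sb] .
  show ?thesis
  proof (rule exI[of _ "max 1 (max N1 N2)"], rule allI, rule impI, rule allI, rule impI, rule conjI)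
    fix n :: nat and p :: real
    assume nN: "max 1 (max N1 N2) \<le> n" and pp: "real n powr (- 1 / m2 V E) \<le> p \<and> p \<le> 1"
    have n1: "real n \<ge> 1" using nN by simp
    have pl: "real n powr (- 1 / m2 V E) \<le> p" and p1: "p \<le> 1" using pp by auto
    have p0: "p > 0" using pl n1 by (smt (verit) powr_gt_zero)
    show "\<forall>e\<in>Kn_edges n.
        measure_pmf.prob (Gnp n p)
          {G. real (card (hrestrict (hshadow (hlink (copies V E n) e)) G))
                \<ge> 4 * real (card E) ^ 2 * real n ^ (card V - 2) * p ^ (card E - 2)}
        \<le> real n powr (-6)"
    proof
      fix e assume e: "e \<in> Kn_edges n"
      obtain K where K: "((1 + real ((K * (card E - 2))^(card E - 2)) * C1 * real n powr (-d)) / 2) ^ K \<le> real n powr (-6)"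
        using N1 nN by auto
      define Y where "Y = real n ^ (card V - 2) * p ^ (card E - 2)"
      define M0 where "M0 = 2 * real (card E) ^ 2 * Y"
      have Y0: "Y > 0" using p0 n1 by (simp add: Y_def)
      have "(2::real) ^ 2 \<le> real (card E) ^ 2" using e2 by (intro power_mono) auto
      hence "1 \<le> 2 * real (card E) ^ 2" by simp
      hence YM: "Y \<le> M0" unfolding M0_def using mult_right_mono[of 1 "2 * real (card E) ^ 2" Y] Y0 by simp
      show "measure_pmf.prob (Gnp n p)
          {G. real (card (hrestrict (hshadow (hlink (copies V E n) e)) G))
                \<ge> 4 * real (card E) ^ 2 * real n ^ (card V - 2) * p ^ (card E - 2)}
        \<le> real n powr (-6)"
      proof (rule final_step[OF p0 p1 F1_sub(1)[OF sb] F1_sub(2)[OF sb]])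
        show "real (card (hshadow (hlink (copies V E n) e))) * p ^ (card E - 2) \<le> M0"
        proof -
          have "real (card (hshadow (hlink (copies V E n) e))) \<le> real (2 * card E ^ 2 * n ^ (card V - 2))"
            using F1_card[OF sb e] by (simp only: of_nat_le_iff)
          thus ?thesis using p0 unfolding M0_def Y_def by (simp add: mult.assoc mult_right_mono)
        qed
        show "\<forall>T. T \<noteq> {} \<longrightarrow> card T \<le> card E - 2 \<longrightarrow>
            real (card {B \<in> hshadow (hlink (copies V E n) e). T \<subseteq> B}) * p ^ (card E - 2 - card T)
            \<le> (C1 * real n powr (-d)) * Y"
          using F1_D[OF sb e _ _ n1 p0 pl] by (simp add: C1_def d_def Y_def mult.assoc)
        show "0 \<le> C1 * real n powr (-d)" using C1 by simp
        show "0 \<le> Y" using Y0 by simp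
        show "Y \<le> M0" by (rule YM)
        show "0 < M0" using Y0 e2 by (simp add: M0_def)
        show "4 * real (card E) ^ 2 * real n ^ (card V - 2) * p ^ (card E - 2) = 2 * M0"
          by (simp add: M0_def Y_def)
        show "((1 + real ((K * (card E - 2))^(card E - 2)) * (C1 * real n powr (-d))) / 2) ^ K \<le> real n powr (-6)"
          using K by (simp add: mult.assoc)
      qed
    qed
    show "\<forall>v<n.
        measure_pmf.prob (Gnp n p)
          {G. real (card (hrestrict (hshadow (copies_at V E n v)) G))
                \<ge> 2 * real (card V) * real (card E) * real n ^ (card V - 1) * p ^ (card E - 1)}
        \<le> real n powr (-6)"
    proof (intro allI impI)
      fix v assume v: "v < n"
      obtain K where K: "((1 + real ((K * (card E - 1))^(card E - 1)) * C2 * real n powr (-d)) / 2) ^ K \<le> real n powr (-6)"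
        using N2 nN by auto
      define Y where "Y = real n ^ (card V - 1) * p ^ (card E - 1)"
      define M0 where "M0 = real (card V) * real (card E) * Y"
      have Y0: "Y > 0" using p0 n1 by (simp add: Y_def)
      have a1: "1 \<le> real (card V)" and a2: "1 \<le> real (card E)" using v3 e2 by auto
      have ve: "1 \<le> real (card V) * real (card E)" using mult_mono[OF a1 a2] by simp
      have YM: "Y \<le> M0" unfolding M0_def using mult_right_mono[OF ve, of Y] Y0 by simp
      show "measure_pmf.prob (Gnp n p)
          {G. real (card (hrestrict (hshadow (copies_at V E n v)) G))
                \<ge> 2 * real (card V) * real (card E) * real n ^ (card V - 1) * p ^ (card E - 1)}
        \<le> real n powr (-6)"
      proof (rule final_step[OF p0 p1 F2_sub(1)[OF sb] F2_sub(2)[OF sb]])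
        show "real (card (hshadow (copies_at V E n v))) * p ^ (card E - 1) \<le> M0"
        proof -
          have "real (card (hshadow (copies_at V E n v))) \<le> real (card V * card E * n ^ (card V - 1))"
            using F2_card[OF sb] by (simp only: of_nat_le_iff)
          thus ?thesis using p0 unfolding M0_def Y_def by (simp add: mult.assoc mult_right_mono)
        qed
        show "\<forall>T. T \<noteq> {} \<longrightarrow> card T \<le> card E - 1 \<longrightarrow>
            real (card {B \<in> hshadow (copies_at V E n v). T \<subseteq> B}) * p ^ (card E - 1 - card T)
            \<le> (C2 * real n powr (-d)) * Y"
          using F2_D[OF sb _ _ n1 p0 pl] by (simp add: C2_def d_def Y_def mult.assoc)
        show "0 \<le> C2 * real n powr (-d)" using C2 by simp
        show "0 \<le> Y" using Y0 by simp
        show "Y \<le> M0" by (rule YM)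
        show "0 < M0" using Y0 ve by (simp add: M0_def)
        show "2 * real (card V) * real (card E) * real n ^ (card V - 1) * p ^ (card E - 1) = 2 * M0"
          by (simp add: M0_def Y_def)
        show "((1 + real ((K * (card E - 1))^(card E - 1)) * (C2 * real n powr (-d))) / 2) ^ K \<le> real n powr (-6)"
          using K by (simp add: mult.assoc)
      qed
    qed
  qed
qed


end
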